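(* Let $\mathcal{X}\subset\mathbb{R}^D$ be a finite set of nonzero points, $1\le d<D$, and $L_*$ a $d$-dimensional subspace; let $\mathcal{X}_{in}=\mathcal{X}\cap L_*$ with $n_1=|\mathcal{X}_{in}|\ge1$, $\mathcal{X}_{out}=\mathcal{X}\setminus\mathcal{X}_{in}$ with $n_0=|\mathcal{X}_{out}|$, and let $\Sigma_{in,*}\in S_{++}(d)$ be a TME solution of $\{U_{L_*}^\top x:x\in\mathcal{X}_{in}\}$ (assumed to exist). Let $\Sigma\in S_{++}(D)$ and suppose $\Sigma=\Sigma_1+\Sigma_2$ with $\Sigma_1,\Sigma_2$ positive semidefinite and $\operatorname{im}(\Sigma_1)\subseteq L_*$. Define $\Sigma_{+,in}=\sum_{x\in\mathcal{X}_{in}}\frac{xx^\top}{x^\top\Sigma^{-1}x}$, $\Sigma_{+,out}=\sum_{x\in\mathcal{X}_{out}}\frac{xx^\top}{x^\top\Sigma^{-1}x}$, $\Sigma_+=\Sigma_{+,in}+\Sigma_{+,out}$, and $h(M)=\sigma_d(\Sigma_{in,*}^{-1/2}U_{L_*}^\top MU_{L_*}\Sigma_{in,*}^{-1/2})$. Then: (i) $h(\Sigma_{+,in})\ge\frac{n_1}{d}h(\Sigma_1)$; (ii) $\Sigma_{+,out}\preceq\|U_{L_*^\perp}^\top\Sigma U_{L_*^\perp}\|\sum_{x\in\mathcal{X}_{out}}\frac{xx^\top}{\|U_{L_*^\perp}^\top x\|^2}$, and consequently $\|\Sigma_{+,out}\|\le\mathcal{A}\,\|U_{L_*^\perp}^\top\Sigma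 U_{L_*^\perp}\|$; (iii) $\operatorname{tr}(U_{L_*^\perp}^\top\Sigma_{+,out}U_{L_*^\perp})\le n_0\|U_{L_*^\perp}^\top\Sigma U_{L_*^\perp}\|$; (iv) $\Sigma_{+,out}\succeq\sigma_D(\Sigma)\sum_{x\in\mathcal{X}_{out}}\frac{xx^\top}{\|x\|^2}$ and $\Sigma_+\succeq\sigma_D(\Sigma)\sum_{x\in\mathcal{X}}\frac{xx^\top}{\|x\|^2}$.
   Context: $S_{++}(k)$ denotes symmetric positive definite $k\times k$ matrices; $\preceq$ is the Loewner order. $U_{L_*}\in\mathbb{R}^{D\times d}$ and $U_{L_*^\perp}\in\mathbb{R}^{D\times(D-d)}$ have orthonormal columns spanning $L_*$ and $L_*^\perp$. $\sigma_i(M)$ is the $i$-th largest eigenvalue of a symmetric matrix $M$; $\|\cdot\|$ is the spectral norm. A TME solution of a finite set $Y\subset\mathbb{R}^d$ with $|Y|=n_1$ is a minimizer over $\Sigma\in S_{++}(d)$ with $\operatorname{tr}\Sigma=d$ of $\frac{d}{n_1}\sum_{y\in Y}\log(y^\top\Sigma^{-1}y)+\log\det\Sigma$. $\mathcal{A}=\big\|\sum_{x\in\mathcal{X}_{out}}xx^\top/\|U_{L_*^\perp}^\top x\|^2\big\|$. *)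

theory Defs
  imports "HOL-Analysis.Analysis" "HOL-Library.Multiset"
begin

text \<open>Outer product x y^T.\<close>
definition outer :: "real^'n \<Rightarrow> real^'n \<Rightarrow> real^'n^'n" where
  "outer x y = (\<chi> i j. x $ i * y $ j)"

text \<open>Symmetric positive semidefinite / positive definite matrices.\<close>
definition psd :: "real^'n^'n \<Rightarrow> bool" where
  "psd A \<longleftrightarrow> transpose A = A \<and> (\<forall>x. 0 \<le> x \<bullet> (A *v x))"

definition pd :: "real^'n^'n \<Rightarrow> bool" where
  "pd A \<longleftrightarrow> transpose A = A \<and> (\<forall>x. x \<noteq> 0 \<longrightarrow> 0 < x \<bullet> (A *v x))"

text \<open>Loewner order: A \<preceq> B iff B - A is positive semidefinite.\<close>
definition loewner_le :: "real^'n^'n \<Rightarrow> real^'n^'n \<Rightarrow> bool" where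
  "loewner_le A B \<longleftrightarrow> psd (B - A)"

text \<open>Spectral norm (operator norm w.r.t. the Euclidean norms).\<close>
definition spec_norm :: "real^'n^'m \<Rightarrow> real" where
  "spec_norm A = onorm (\<lambda>x. A *v x)"

text \<open>Eigenvalues with (geometric) multiplicity, and sigma i A = i-th largest one (i \<ge> 1).\<close>
definition eigvals_mset :: "real^'n^'n \<Rightarrow> real multiset" where
  "eigvals_mset A = Abs_multiset (\<lambda>l. dim {v. A *v v = l *\<^sub>R v})"

definition sigma :: "nat \<Rightarrow> real^'n^'n \<Rightarrow> real" where
  "sigma i A = rev (sorted_list_of_multiset (eigvals_mset A)) ! (i - 1)"

text \<open>Principal (positive semidefinite) square root.\<close>
definition mat_sqrt :: "real^'n^'n \<Rightarrow> real^'n^'n" where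
  "mat_sqrt A = (THE B. psd B \<and> B ** B = A)"

text \<open>TME objective and TME solution of a finite set Y in R^d.\<close>
definition tme_obj :: "(real^'d) set \<Rightarrow> real^'d^'d \<Rightarrow> real" where
  "tme_obj Y S = (real CARD('d) / real (card Y)) * (\<Sum>y\<in>Y. ln (y \<bullet> (matrix_inv S *v y)))
                 + ln (det S)"

definition is_TME :: "(real^'d) set \<Rightarrow> real^'d^'d \<Rightarrow> bool" where
  "is_TME Y S \<longleftrightarrow> pd S \<and> trace S = real CARD('d) \<and>
     (\<forall>S'. pd S' \<and> trace S' = real CARD('d) \<longrightarrow> tme_obj Y S \<le> tme_obj Y S')"

end

theory Submission
  imports Defs
begin


lemma inner_mulv_transpose: "(x::real^'m) \<bullet> ((A::real^'n^'m) *v y) = (transpose A *v x) \<bullet> y"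
  by (simp add: dot_lmul_matrix)

lemma outer_mulv: "outer x y *v w = (y \<bullet> w) *\<^sub>R (x::real^'n)"
  by (simp add: outer_def matrix_vector_mult_def inner_vec_def vec_eq_iff sum_distrib_left algebra_simps)

lemma mat_outer: "(A::real^'n^'n) ** outer x y = outer (A *v x) y"
  unfolding outer_def matrix_matrix_mult_def matrix_vector_mult_def
  by (simp add: vec_eq_iff sum_distrib_right mult.assoc)

lemma outer_mat: "outer x y ** (B::real^'n^'n) = outer x (transpose B *v y)"
  unfolding outer_def matrix_matrix_mult_def matrix_vector_mult_def transpose_def
  by (simp add: vec_eq_iff sum_distrib_left mult.assoc mult.commute mult.left_commute)

lemma sandwich_outer: "transpose (B::real^'m^'n) ** outer x y ** B = outer (transpose B *v x) (transpose B *v y)"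
  unfolding outer_def matrix_matrix_mult_def matrix_vector_mult_def transpose_def
  by (simp add: vec_eq_iff sum_distrib_left sum_distrib_right mult.assoc mult.commute mult.left_commute)

lemma transpose_outer: "transpose (outer x y) = outer y (x::real^'n)"
  by (simp add: outer_def transpose_def vec_eq_iff)

lemma quad_outer: "w \<bullet> (outer x y *v w) = (w \<bullet> x) * (y \<bullet> (w::real^'n))"
  by (simp add: outer_mulv)

lemma trace_outer: "trace (outer x x) = x \<bullet> (x::real^'n)"
  by (simp add: trace_def outer_def inner_vec_def)

lemma sum_mat_right: "(\<Sum>i\<in>S. f i) ** (B::real^'p^'n) = (\<Sum>i\<in>S. f i ** B)"
  for f :: "'a \<Rightarrow> real^'n^'m"
proof (induction S rule: infinite_finite_induct)
  case (insert x F) then show ?case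
    by (simp add: matrix_matrix_mult_def vec_eq_iff sum.distrib distrib_right)
qed (auto simp: matrix_matrix_mult_def vec_eq_iff)

lemma sum_mat_left: "(B::real^'m^'p) ** (\<Sum>i\<in>S. f i) = (\<Sum>i\<in>S. B ** f i)"
  for f :: "'a \<Rightarrow> real^'n^'m"
proof (induction S rule: infinite_finite_induct)
  case (insert x F) then show ?case
    by (simp add: matrix_add_ldistrib)
qed (auto simp: matrix_matrix_mult_def vec_eq_iff)

lemma sum_mulv: "(\<Sum>i\<in>S. f i) *v (w::real^'n) = (\<Sum>i\<in>S. f i *v w)"
  for f :: "'a \<Rightarrow> real^'n^'m"
proof (induction S rule: infinite_finite_induct)
  case (insert x F) then show ?case
    by (simp add: matrix_vector_mult_add_rdistrib)
qed (auto simp: matrix_vector_mult_def vec_eq_iff)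

lemma transpose_sum: "transpose (\<Sum>i\<in>S. f i) = (\<Sum>i\<in>S. transpose (f i))"
  for f :: "'a \<Rightarrow> real^'n^'m"
proof (induction S rule: infinite_finite_induct)
  case (insert x F) then show ?case
    by (simp add: transpose_def vec_eq_iff)
qed (auto simp: transpose_def vec_eq_iff)

lemma transpose_add': "transpose (A + B) = transpose A + transpose (B::real^'n^'m)"
  by (simp add: transpose_def vec_eq_iff)

lemma transpose_diff': "transpose (A - B) = transpose A - transpose (B::real^'n^'m)"
  by (simp add: transpose_def vec_eq_iff)

lemma scaleR_mat_left: "(c *\<^sub>R A) ** (B::real^'p^'n) = c *\<^sub>R (A ** (B::real^'p^'n))" for A :: "real^'n^'m"
  by (metis scalar_matrix_assoc)

lemma scaleR_mat_right: "A ** (c *\<^sub>R B) = c *\<^sub>R (A ** (B::real^'p^'n))" for A :: "real^'n^'m"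
  by (simp add: matrix_matrix_mult_def vec_eq_iff sum_distrib_left mult_ac)

lemma scaleR_mulv: "(c *\<^sub>R A) *v w = c *\<^sub>R (A *v (w::real^'n))" for A :: "real^'n^'m"
  by (simp add: scaleR_matrix_vector_assoc)

lemma trace_sum: "trace (\<Sum>i\<in>S. f i) = (\<Sum>i\<in>S. trace (f i))"
  for f :: "'a \<Rightarrow> real^'n^'n"
proof (induction S rule: infinite_finite_induct)
  case (insert x F) then show ?case
    by (simp add: trace_add)
qed (auto simp: trace_def)

lemma trace_scaleR: "trace (c *\<^sub>R A) = c * trace (A::real^'n^'n)"
  by (simp add: trace_def sum_distrib_left)

lemma sym_inner: "transpose A = A \<Longrightarrow> x \<bullet> (A *v y) = (A *v x) \<bullet> (y::real^'n)"
  by (metis inner_mulv_transpose)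

(* psd basics *)
lemma psd_outer: "psd (outer x (x::real^'n))"
  unfolding psd_def by (simp add: transpose_outer quad_outer inner_commute)

lemma psd_add: "psd A \<Longrightarrow> psd B \<Longrightarrow> psd (A + B)"
  unfolding psd_def by (simp add: transpose_add' matrix_vector_mult_add_rdistrib inner_add_right add_nonneg_nonneg)

lemma psd_scaleR: "psd A \<Longrightarrow> 0 \<le> c \<Longrightarrow> psd (c *\<^sub>R A)"
  unfolding psd_def by (simp add: transpose_scalar scaleR_mulv)

lemma psd_zero: "psd (0::real^'n^'n)"
  unfolding psd_def by (simp add: transpose_def vec_eq_iff)

lemma psd_sum: "(\<And>i. i \<in> S \<Longrightarrow> psd (f i)) \<Longrightarrow> psd (\<Sum>i\<in>S. f i)"
proof (induction S rule: infinite_finite_induct)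
  case (insert x F) then show ?case
    by (simp add: psd_add)
qed (auto simp: psd_zero)

lemma inner_transpose_mulv: "(x::real^'n) \<bullet> (transpose (B::real^'n^'m) *v y) = (B *v x) \<bullet> y"
  using inner_mulv_transpose[of x "transpose B" y] by simp

lemma psd_sandwich: "psd A \<Longrightarrow> psd (transpose B ** A ** B)"
proof -
  assume a: "psd A"
  have "x \<bullet> ((transpose B ** A ** B) *v x) = (B *v x) \<bullet> (A *v (B *v x))" for x
    by (simp only: matrix_vector_mul_assoc[symmetric] inner_transpose_mulv)
  with a show ?thesis unfolding psd_def
    by (simp add: matrix_transpose_mul matrix_mul_assoc)
qed

lemma psd_weighted_outer:
  assumes "\<And>x. x \<in> S \<Longrightarrow> 0 \<le> g x"
  shows "psd (\<Sum>x\<in>S. g x *\<^sub>R outer x x)"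
  using assms by (intro psd_sum psd_scaleR psd_outer) auto

lemma sum_outer_diff:
  "(\<Sum>x\<in>S. a x *\<^sub>R outer x x) - (\<Sum>x\<in>S. b x *\<^sub>R outer x x) = (\<Sum>x\<in>S. (a x - b x) *\<^sub>R outer x (x::real^'n))"
  by (simp add: sum_subtractf scaleR_diff_left)

lemma scaleR_sum_outer:
  "c *\<^sub>R (\<Sum>x\<in>S. a x *\<^sub>R outer x x) = (\<Sum>x\<in>S. (c * a x) *\<^sub>R outer x (x::real^'n))"
  by (simp add: scaleR_sum_right)



lemma mat_eq_on_span:
  fixes M N :: "real^'n^'m"
  assumes "\<And>b. b \<in> Bb \<Longrightarrow> M *v b = N *v b" and "span Bb = UNIV"
  shows "M = N"
proof -
  have "M *v x = N *v x" for x
    using linear_eq_on_span[of "(*v) M" "(*v) N" Bb x] assms by auto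
  then show ?thesis by (simp add: matrix_eq)
qed

lemma rayleigh_min:
  fixes A :: "real^'n^'n"
  assumes sym: "transpose A = A" and W: "subspace W" and inv: "\<And>x. x \<in> W \<Longrightarrow> A *v x \<in> W"
    and ne: "W \<noteq> {0}"
  obtains v \<mu> where "v \<in> W" "norm v = 1" "A *v v = \<mu> *\<^sub>R v" "\<forall>x\<in>W. \<mu> * (x \<bullet> x) \<le> x \<bullet> (A *v x)"
proof -
  define K where "K = W \<inter> sphere 0 1"
  have "compact K" unfolding K_def
    by (rule closed_Int_compact[OF closed_subspace[OF W] compact_sphere])
  obtain w where w: "w \<in> W" "w \<noteq> 0" using ne W subspace_0 by blast
  have "w /\<^sub>R norm w \<in> K" unfolding K_def using w W by (simp add: subspace_scale)
  then have "K \<noteq> {}" by blast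
  have "continuous_on K (\<lambda>x. x \<bullet> (A *v x))"
    by (intro continuous_intros linear_continuous_on matrix_vector_mul_bounded_linear)
  then obtain v where v: "v \<in> K" and vmin: "\<And>y. y \<in> K \<Longrightarrow> v \<bullet> (A *v v) \<le> y \<bullet> (A *v y)"
    using continuous_attains_inf[OF \<open>compact K\<close> \<open>K \<noteq> {}\<close>] by blast
  define \<mu> where "\<mu> = v \<bullet> (A *v v)"
  have vW: "v \<in> W" and nv: "norm v = 1" using v K_def by auto
  have vv: "v \<bullet> v = 1" using nv by (simp add: norm_eq_1)
  have rq: "\<mu> * (x \<bullet> x) \<le> x \<bullet> (A *v x)" if "x \<in> W" for x
  proof (cases "x = 0")
    case False
    let ?y = "x /\<^sub>R norm x"
    have "?y \<in> K" unfolding K_def using that False W by (simp add: subspace_scale)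
    then have "\<mu> \<le> ?y \<bullet> (A *v ?y)" using vmin \<mu>_def by blast
    also have "\<dots> = (x \<bullet> (A *v x)) / (norm x)^2"
      by (simp add: matrix_vector_mult_scaleR power2_eq_square divide_inverse)
    finally have "\<mu> * (norm x)^2 \<le> x \<bullet> (A *v x)"
      using False by (simp add: pos_le_divide_eq)
    then show ?thesis by (simp add: power2_norm_eq_inner)
  qed simp
  define u where "u = A *v v - \<mu> *\<^sub>R v"
  have uW: "u \<in> W" unfolding u_def using inv vW W by (simp add: subspace_diff subspace_scale)
  have uv: "u \<bullet> v = 0"
  proof -
    have "u \<bullet> v = (A *v v) \<bullet> v - \<mu> * (v \<bullet> v)" unfolding u_def by (simp add: inner_diff_left)
    also have "(A *v v) \<bullet> v = \<mu>" unfolding \<mu>_def by (rule inner_commute)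
    finally show ?thesis using vv by simp
  qed
  have uAv: "u \<bullet> (A *v v) = u \<bullet> u"
  proof -
    have "A *v v = u + \<mu> *\<^sub>R v" unfolding u_def by simp
    then show ?thesis using uv by (simp add: inner_add_right)
  qed
  have vAu: "v \<bullet> (A *v u) = u \<bullet> u"
    using sym_inner[OF sym, of v u] uAv by (simp add: inner_commute)
  define a where "a = u \<bullet> u"
  define C where "C = u \<bullet> (A *v u) - \<mu> * a"
  have key: "0 \<le> 2 * t * a + t^2 * C" for t
  proof -
    have xW: "v + t *\<^sub>R u \<in> W" using vW uW W by (simp add: subspace_add subspace_scale)
    have "(v + t *\<^sub>R u) \<bullet> (v + t *\<^sub>R u) = 1 + t^2 * a"
      using vv uv by (simp add: a_def inner_add_left inner_add_right inner_commute power2_eq_square)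
    moreover have "(v + t *\<^sub>R u) \<bullet> (A *v (v + t *\<^sub>R u)) = \<mu> + 2 * t * a + t^2 * (u \<bullet> (A *v u))"
      using uAv vAu \<mu>_def
      by (simp add: a_def matrix_vector_right_distrib matrix_vector_mult_scaleR inner_add_left
          inner_add_right power2_eq_square algebra_simps)
    ultimately show ?thesis using rq[OF xW] by (simp add: C_def algebra_simps)
  qed
  have "a = 0"
  proof (rule ccontr)
    assume "a \<noteq> 0"
    then have apos: "a > 0" unfolding a_def by simp
    show False
    proof (cases "C \<le> 0")
      case True
      then show False using key[of "-1"] apos by simp
    next
      case False
      have "0 \<le> 2 * (- a / C) * a + (- a / C)^2 * C" by (rule key)
      also have "\<dots> = - (a * a) / C" using False by (simp add: power2_eq_square field_simps)
      finally have "a * a / C \<le> 0" by simp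
      moreover have "0 < a * a / C" using False apos by (intro divide_pos_pos mult_pos_pos) auto
      ultimately show False by linarith
    qed
  qed
  then have "u = 0" unfolding a_def by simp
  then have "A *v v = \<mu> *\<^sub>R v" unfolding u_def by simp
  then show ?thesis using that vW nv rq by blast
qed



lemma eig_orth:
  fixes A :: "real^'n^'n"
  assumes sym: "transpose A = A" and "A *v u = l *\<^sub>R u" "A *v v = m *\<^sub>R v" "l \<noteq> m"
  shows "u \<bullet> v = 0"
proof -
  have "l * (u \<bullet> v) = (A *v u) \<bullet> v" using assms by simp
  also have "\<dots> = u \<bullet> (A *v v)" using sym_inner[OF sym] by simp
  also have "\<dots> = m * (u \<bullet> v)" using assms by simp
  finally show ?thesis using assms(4) by simp
qed

lemma subspace_eig: "subspace {v. (A::real^'n^'n) *v v = l *\<^sub>R v}"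
  unfolding subspace_def by (simp add: matrix_vector_right_distrib matrix_vector_mult_scaleR scaleR_add_right)

definition EVs :: "real^'n^'n \<Rightarrow> real set" where
  "EVs A = {l. \<exists>v. v \<noteq> 0 \<and> A *v v = l *\<^sub>R v}"

lemma finite_EVs:
  fixes A :: "real^'n^'n"
  assumes sym: "transpose A = A"
  shows "finite (EVs A)"
proof -
  define f where "f l = (SOME v. v \<noteq> 0 \<and> A *v v = l *\<^sub>R v)" for l
  have f: "f l \<noteq> 0 \<and> A *v f l = l *\<^sub>R f l" if "l \<in> EVs A" for l
  proof -
    have "\<exists>v. v \<noteq> 0 \<and> A *v v = l *\<^sub>R v" using that unfolding EVs_def by blast
    then show ?thesis unfolding f_def by (rule someI_ex)
  qed
  have inj: "inj_on f (EVs A)"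
  proof (rule inj_onI)
    fix l m assume "l \<in> EVs A" "m \<in> EVs A" "f l = f m"
    have "l *\<^sub>R f l = m *\<^sub>R f l" using f[OF \<open>l \<in> EVs A\<close>] f[OF \<open>m \<in> EVs A\<close>] \<open>f l = f m\<close> by metis
    moreover have "f l \<noteq> 0" using f[OF \<open>l \<in> EVs A\<close>] by blast
    ultimately show "l = m" by simp
  qed
  have "pairwise orthogonal (f ` EVs A)"
    unfolding pairwise_def orthogonal_def
  proof clarify
    fix l m assume lm: "l \<in> EVs A" "m \<in> EVs A" "f l \<noteq> f m"
    then have "l \<noteq> m" by auto
    then show "f l \<bullet> f m = 0" using eig_orth[OF sym conjunct2[OF f[OF lm(1)]] conjunct2[OF f[OF lm(2)]]] by blast
  qed
  moreover have "0 \<notin> f ` EVs A" using f by auto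
  ultimately have "independent (f ` EVs A)" by (rule pairwise_orthogonal_independent)
  then have "finite (f ` EVs A)" by (rule finiteI_independent)
  then show ?thesis using inj finite_imageD by blast
qed

lemma sym_eigenbasis:
  fixes A :: "real^'n^'n"
  assumes sym: "transpose A = A"
  obtains Bb where "pairwise orthogonal Bb" "\<forall>b\<in>Bb. norm b = 1"
    "\<forall>b\<in>Bb. A *v b = (b \<bullet> (A *v b)) *\<^sub>R b"
    "independent Bb" "span Bb = UNIV" "finite Bb" "card Bb = CARD('n)"
    "card Bb = (\<Sum>l\<in>EVs A. dim {v. A *v v = l *\<^sub>R v})"
proof -
  define E where "E l = {v. A *v v = l *\<^sub>R v}" for l
  have sE: "subspace (E l)" for l unfolding E_def by (rule subspace_eig)
  have ex: "\<forall>l. \<exists>B. B \<subseteq> E l \<and> pairwise orthogonal B \<and> (\<forall>x\<in>B. norm x = 1) \<and> independent B \<and> card B = dim (E l) \<and> span B = E l"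
  proof
    fix l
    obtain B where "B \<subseteq> E l" "pairwise orthogonal B" "\<And>x. x \<in> B \<Longrightarrow> norm x = 1"
      "independent B" "card B = dim (E l)" "span B = E l"
      using orthonormal_basis_subspace[OF sE[of l]] by blast
    then show "\<exists>B. B \<subseteq> E l \<and> pairwise orthogonal B \<and> (\<forall>x\<in>B. norm x = 1) \<and> independent B \<and> card B = dim (E l) \<and> span B = E l"
      by blast
  qed
  obtain Bs where Bs0: "\<forall>l. Bs l \<subseteq> E l \<and> pairwise orthogonal (Bs l) \<and> (\<forall>x\<in>Bs l. norm x = 1) \<and> independent (Bs l) \<and> card (Bs l) = dim (E l) \<and> span (Bs l) = E l"
    using choice[OF ex] by blast
  have Bs: "\<And>l. Bs l \<subseteq> E l" "\<And>l. pairwise orthogonal (Bs l)" "\<And>l x. x \<in> Bs l \<Longrightarrow> norm x = 1"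
    "\<And>l. independent (Bs l)" "\<And>l. card (Bs l) = dim (E l)" "\<And>l. span (Bs l) = E l"
    using Bs0 by auto
  have finBs: "finite (Bs l)" for l using Bs(4) finiteI_independent by blast
  define Bb where "Bb = (\<Union>l\<in>EVs A. Bs l)"
  have finEV: "finite (EVs A)" by (rule finite_EVs[OF sym])
  have nz: "b \<noteq> 0" if "b \<in> Bs l" for b l using Bs(3)[OF that] by auto
  have eigb: "A *v b = l *\<^sub>R b" if "b \<in> Bs l" for b l using Bs(1) that unfolding E_def by auto
  have norm1: "norm b = 1" if "b \<in> Bb" for b using that Bs(3) unfolding Bb_def by auto
  have eig: "A *v b = (b \<bullet> (A *v b)) *\<^sub>R b" if bB: "b \<in> Bb" for b
  proof -
    obtain l where "b \<in> Bs l" using bB unfolding Bb_def by auto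
    then have "A *v b = l *\<^sub>R b" by (rule eigb)
    moreover have "b \<bullet> b = 1" using norm1[OF bB] by (simp add: norm_eq_1)
    ultimately show ?thesis by simp
  qed
  have po: "pairwise orthogonal Bb"
    unfolding pairwise_def Bb_def
  proof clarify
    fix l m x y assume x: "x \<in> Bs l" and y: "y \<in> Bs m" and "x \<noteq> y"
    show "orthogonal x y"
    proof (cases "l = m")
      case True then show ?thesis using Bs(2)[of l] x y \<open>x \<noteq> y\<close> unfolding pairwise_def by auto
    next
      case False then show ?thesis unfolding orthogonal_def using eig_orth[OF sym eigb[OF x] eigb[OF y]] by simp
    qed
  qed
  have z: "0 \<notin> Bb" using norm1 by force
  have ind: "independent Bb" by (rule pairwise_orthogonal_independent[OF po z])
  have finBb: "finite Bb" using ind finiteI_independent by blast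
  define S where "S = span Bb"
  have sS: "subspace S" unfolding S_def by simp
  have AS: "A *v x \<in> S" if "x \<in> S" for x
  proof -
    have "(*v) A ` Bb \<subseteq> S" using eig unfolding S_def by (metis image_subsetI span_base span_mul)
    then have "span ((*v) A ` Bb) \<subseteq> S" unfolding S_def by (simp add: span_minimal)
    moreover have "span ((*v) A ` Bb) = (*v) A ` span Bb" by (rule span_linear_image) simp
    ultimately show ?thesis using that unfolding S_def by auto
  qed
  define W where "W = orthogonal_comp S"
  have sW: "subspace W" unfolding W_def by (rule subspace_orthogonal_comp)
  have AW: "A *v x \<in> W" if "x \<in> W" for x
    unfolding W_def orthogonal_comp_def orthogonal_def
  proof clarify
    fix y assume "y \<in> S"
    then have "A *v y \<in> S" by (rule AS)
    then have "(A *v y) \<bullet> x = 0" using that unfolding W_def orthogonal_comp_def orthogonal_def by blast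
    then show "y \<bullet> (A *v x) = 0" using sym_inner[OF sym, of y x] by simp
  qed
  have W0: "W = {0}"
  proof (rule ccontr)
    assume "W \<noteq> {0}"
    then obtain v \<mu> where v: "v \<in> W" "norm v = 1" "A *v v = \<mu> *\<^sub>R v"
      using rayleigh_min[OF sym sW AW] by metis
    then have "\<mu> \<in> EVs A" unfolding EVs_def by (intro CollectI exI[of _ v]) auto
    moreover have "v \<in> E \<mu>" using v unfolding E_def by simp
    ultimately have "v \<in> span (Bs \<mu>)" using Bs(6) by simp
    moreover have "span (Bs \<mu>) \<subseteq> S" unfolding S_def Bb_def
      using \<open>\<mu> \<in> EVs A\<close> by (intro span_mono) auto
    ultimately have "v \<in> S" by auto
    with v(1) have "v \<bullet> v = 0" unfolding W_def orthogonal_comp_def orthogonal_def by blast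
    with v(2) show False by simp
  qed
  have spanU: "span Bb = UNIV"
  proof -
    have "S = orthogonal_comp W" unfolding W_def using orthogonal_comp_self[OF sS] by simp
    then show ?thesis using W0 S_def by simp
  qed
  have cardn: "card Bb = CARD('n)"
    using dim_span_eq_card_independent[OF ind] spanU by simp
  have "card Bb = (\<Sum>l\<in>EVs A. card (Bs l))" unfolding Bb_def
  proof (rule card_UN_disjoint[OF finEV])
    show "\<forall>l\<in>EVs A. finite (Bs l)" using finBs by blast
    show "\<forall>l\<in>EVs A. \<forall>m\<in>EVs A. l \<noteq> m \<longrightarrow> Bs l \<inter> Bs m = {}"
    proof (intro ballI impI)
      fix l m :: real assume "l \<in> EVs A" "m \<in> EVs A" "l \<noteq> m"
      show "Bs l \<inter> Bs m = {}"
      proof (rule ccontr)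
        assume "Bs l \<inter> Bs m \<noteq> {}"
        then obtain b where b: "b \<in> Bs l" "b \<in> Bs m" by blast
        then have "l *\<^sub>R b = m *\<^sub>R b" using eigb by metis
        with nz[OF b(1)] \<open>l \<noteq> m\<close> show False by (simp add: scaleR_cancel_right)
      qed
    qed
  qed
  also have "\<dots> = (\<Sum>l\<in>EVs A. dim {v. A *v v = l *\<^sub>R v})" using Bs(5) unfolding E_def by simp
  finally have "card Bb = (\<Sum>l\<in>EVs A. dim {v. A *v v = l *\<^sub>R v})" .
  note cs = this
  show ?thesis
    apply (rule that)
    using po norm1 eig ind spanU finBb cardn cs by auto
qed



lemma eigvals_mset_props:
  fixes A :: "real^'n^'n"
  assumes sym: "transpose A = A"
  shows "set_mset (eigvals_mset A) = EVs A" "size (eigvals_mset A) = CARD('n)"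
proof -
  define f where "f l = dim {v. A *v v = l *\<^sub>R v}" for l
  have pos: "0 < f l \<longleftrightarrow> l \<in> EVs A" for l
  proof -
    have "f l = 0 \<longleftrightarrow> {v. A *v v = l *\<^sub>R v} \<subseteq> {0}" unfolding f_def by (rule dim_eq_0)
    then have "0 < f l \<longleftrightarrow> \<not> {v. A *v v = l *\<^sub>R v} \<subseteq> {0}" by linarith
    also have "\<dots> \<longleftrightarrow> l \<in> EVs A" unfolding EVs_def by auto
    finally show ?thesis .
  qed
  have fin: "finite {l. 0 < f l}" using pos finite_EVs[OF sym] by simp
  have cnt: "count (eigvals_mset A) = f"
    unfolding eigvals_mset_def f_def[abs_def] using fin unfolding f_def[abs_def] by (simp add: count_Abs_multiset)
  show set: "set_mset (eigvals_mset A) = EVs A"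
    using pos cnt by (auto simp flip: count_greater_zero_iff)
  obtain Bb :: "(real^'n) set" where "pairwise orthogonal Bb" "\<forall>b\<in>Bb. norm b = 1"
    "\<forall>b\<in>Bb. A *v b = (b \<bullet> (A *v b)) *\<^sub>R b"
    "independent Bb" "span Bb = UNIV" "finite Bb" "card Bb = CARD('n)"
    "card Bb = (\<Sum>l\<in>EVs A. dim {v. A *v v = l *\<^sub>R v})"
    by (rule sym_eigenbasis[OF sym])
  then show "size (eigvals_mset A) = CARD('n)"
    by (simp add: size_multiset_overloaded_eq set cnt f_def)
qed

lemma sigma_props:
  fixes A :: "real^'n^'n"
  assumes sym: "transpose A = A"
  shows "sigma CARD('n) A \<in> EVs A" "\<And>l. l \<in> EVs A \<Longrightarrow> sigma CARD('n) A \<le> l"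
proof -
  define xs where "xs = sorted_list_of_multiset (eigvals_mset A)"
  have mx: "mset xs = eigvals_mset A" unfolding xs_def by simp
  have "length xs = size (mset xs)" by simp
  then have len: "length xs = CARD('n)" using eigvals_mset_props(2)[OF sym] mx by simp
  have "set xs = set_mset (mset xs)" by simp
  then have setxs: "set xs = EVs A" using eigvals_mset_props(1)[OF sym] mx by simp
  have sorted: "sorted xs" unfolding xs_def by simp
  have n0: "0 < CARD('n)" by simp
  have sig: "sigma CARD('n) A = xs ! 0"
    unfolding sigma_def xs_def[symmetric] using len n0 by (simp add: rev_nth)
  have "xs ! 0 \<in> set xs" using len n0 by (intro nth_mem) simp
  then show "sigma CARD('n) A \<in> EVs A" using sig setxs by simp
  fix l assume "l \<in> EVs A"
  then have "l \<in> set xs" using setxs by simp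
  then obtain j where j: "j < length xs" "xs ! j = l" by (auto simp: in_set_conv_nth)
  have "xs ! 0 \<le> xs ! j" by (rule sorted_nth_mono[OF sorted _ j(1)]) simp
  then show "sigma CARD('n) A \<le> l" using sig j by simp
qed

lemma sigma_le_rayleigh:
  fixes A :: "real^'n^'n"
  assumes sym: "transpose A = A"
  shows "sigma CARD('n) A * (x \<bullet> x) \<le> x \<bullet> (A *v x)"
proof -
  have ne: "(UNIV :: (real^'n) set) \<noteq> {0}"
  proof
    assume "(UNIV :: (real^'n) set) = {0}"
    then have "(axis undefined 1 :: real^'n) = 0" by blast
    then show False by (simp add: axis_eq_0_iff)
  qed
  have inv: "\<And>x. x \<in> UNIV \<Longrightarrow> A *v x \<in> UNIV" by simp
  obtain v \<mu> where v0: "v \<in> UNIV" and v: "norm v = 1" "A *v v = \<mu> *\<^sub>R v" "\<forall>x\<in>UNIV. \<mu> * (x \<bullet> x) \<le> x \<bullet> (A *v x)"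
    by (rule rayleigh_min[OF sym subspace_UNIV inv ne])
  have "\<mu> \<in> EVs A" unfolding EVs_def using v by (intro CollectI exI[of _ v]) auto
  then have "sigma CARD('n) A \<le> \<mu>" by (rule sigma_props(2)[OF sym])
  then have "sigma CARD('n) A * (x \<bullet> x) \<le> \<mu> * (x \<bullet> x)" by (simp add: mult_right_mono)
  also have "\<dots> \<le> x \<bullet> (A *v x)" using v(3) by simp
  finally show ?thesis .
qed

lemma sigma_ge:
  fixes A :: "real^'n^'n"
  assumes sym: "transpose A = A" and lb: "\<And>x. c * (x \<bullet> x) \<le> x \<bullet> (A *v x)"
  shows "c \<le> sigma CARD('n) A"
proof -
  obtain v where v: "v \<noteq> 0" "A *v v = sigma CARD('n) A *\<^sub>R v"
    using sigma_props(1)[OF sym] unfolding EVs_def by blast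
  have "c * (v \<bullet> v) \<le> sigma CARD('n) A * (v \<bullet> v)" using lb[of v] v(2) by simp
  moreover have "0 < v \<bullet> v" using v(1) by simp
  ultimately show ?thesis by (simp add: mult_le_cancel_right)
qed

lemma sqrt_on_eig:
  fixes A P :: "real^'n^'n"
  assumes P: "psd P" and PP: "P ** P = A" and b: "A *v b = l *\<^sub>R b" and l: "0 \<le> l"
  shows "P *v b = sqrt l *\<^sub>R b"
proof -
  define s where "s = sqrt l"
  have s0: "0 \<le> s" and ss: "s * s = l" using l unfolding s_def by (auto simp: real_sqrt_mult_self)
  have symP: "transpose P = P" using P unfolding psd_def by simp
  define u where "u = P *v b - s *\<^sub>R b"
  have "P *v u + s *\<^sub>R u = P *v (P *v b) - (s * s) *\<^sub>R b"
    unfolding u_def by (simp add: matrix_vector_mult_diff_distrib matrix_vector_mult_scaleR algebra_simps)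
  also have "\<dots> = 0" using PP b ss by (simp add: matrix_vector_mul_assoc)
  finally have eq: "P *v u + s *\<^sub>R u = 0" .
  show ?thesis
  proof (cases "s = 0")
    case False
    then have spos: "0 < s" using s0 by simp
    have "u \<bullet> (P *v u) + s * (u \<bullet> u) = u \<bullet> (P *v u + s *\<^sub>R u)" by (simp add: inner_add_right)
    also have "\<dots> = 0" using eq by simp
    finally have "u \<bullet> (P *v u) + s * (u \<bullet> u) = 0" .
    moreover have "0 \<le> u \<bullet> (P *v u)" using P unfolding psd_def by simp
    moreover have "0 \<le> u \<bullet> u" by simp
    moreover have "0 \<le> s * (u \<bullet> u)" using s0 by simp
    ultimately have "s * (u \<bullet> u) = 0" by linarith
    then have "u = 0" using spos by simp
    then show ?thesis unfolding u_def s_def by simp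
  next
    case True
    then have "l = 0" using ss by simp
    then have Ab: "A *v b = 0" using b by simp
    have "(P *v b) \<bullet> (P *v b) = b \<bullet> (P *v (P *v b))" using sym_inner[OF symP, of b "P *v b"] by simp
    also have "\<dots> = 0" using Ab PP by (simp add: matrix_vector_mul_assoc)
    finally have "P *v b = 0" by simp
    then show ?thesis using True s_def by simp
  qed
qed

lemma psd_sqrt_ex1:
  fixes A :: "real^'n^'n"
  assumes A: "psd A"
  shows "\<exists>!R. psd R \<and> R ** R = A"
proof -
  have sym: "transpose A = A" using A unfolding psd_def by simp
  obtain Bb :: "(real^'n) set" where po: "pairwise orthogonal Bb" and n1': "\<forall>b\<in>Bb. norm b = 1"
    and eig': "\<forall>b\<in>Bb. A *v b = (b \<bullet> (A *v b)) *\<^sub>R b"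
    and "independent Bb" and sp: "span Bb = UNIV" and fin: "finite Bb" and "card Bb = CARD('n)"
    and "card Bb = (\<Sum>l\<in>EVs A. dim {v. A *v v = l *\<^sub>R v})"
    by (rule sym_eigenbasis[OF sym])
  have n1: "\<And>b. b \<in> Bb \<Longrightarrow> norm b = 1" using n1' by blast
  have eig: "\<And>b. b \<in> Bb \<Longrightarrow> A *v b = (b \<bullet> (A *v b)) *\<^sub>R b" using eig' by blast
  define lam where "lam b = b \<bullet> (A *v b)" for b
  have lam0: "0 \<le> lam b" for b using A unfolding psd_def lam_def by simp
  have orth: "b \<bullet> c = (if b = c then 1 else 0)" if "b \<in> Bb" "c \<in> Bb" for b c
    using po n1 that unfolding pairwise_def orthogonal_def by (auto simp: norm_eq_1)
  define R where "R = (\<Sum>b\<in>Bb. sqrt (lam b) *\<^sub>R outer b b)"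
  have Rc: "R *v c = sqrt (lam c) *\<^sub>R c" if c: "c \<in> Bb" for c
  proof -
    have "R *v c = (\<Sum>b\<in>Bb. (sqrt (lam b) * (b \<bullet> c)) *\<^sub>R b)"
      unfolding R_def by (simp add: sum_mulv scaleR_mulv outer_mulv)
    also have "\<dots> = (\<Sum>b\<in>Bb. (if b = c then sqrt (lam c) *\<^sub>R c else 0))"
      by (rule sum.cong) (auto simp: orth c)
    also have "\<dots> = sqrt (lam c) *\<^sub>R c" using fin c by (simp add: sum.delta')
    finally show ?thesis .
  qed
  have psdR: "psd R" unfolding R_def by (rule psd_weighted_outer) (simp add: lam0)
  have RR: "R ** R = A"
  proof (rule mat_eq_on_span[OF _ sp])
    fix c assume c: "c \<in> Bb"
    have "(R ** R) *v c = R *v (R *v c)" by (simp add: matrix_vector_mul_assoc)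
    also have "\<dots> = (sqrt (lam c) * sqrt (lam c)) *\<^sub>R c" using Rc[OF c] by (simp add: matrix_vector_mult_scaleR)
    also have "\<dots> = lam c *\<^sub>R c" using lam0 by (simp add: real_sqrt_mult_self)
    also have "\<dots> = A *v c" using eig[OF c] lam_def by simp
    finally show "(R ** R) *v c = A *v c" .
  qed
  have uniq: "P = R" if P: "psd P" "P ** P = A" for P
  proof (rule mat_eq_on_span[OF _ sp])
    fix c assume c: "c \<in> Bb"
    have "P *v c = sqrt (lam c) *\<^sub>R c"
      by (rule sqrt_on_eig[OF P(1) P(2) _ lam0]) (use eig[OF c] lam_def in simp)
    then show "P *v c = R *v c" using Rc[OF c] by simp
  qed
  show ?thesis using psdR RR uniq by blast
qed

lemma mat_sqrt_props:
  fixes A :: "real^'n^'n"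
  assumes "psd A"
  shows "psd (mat_sqrt A)" "mat_sqrt A ** mat_sqrt A = A"
  using theI'[OF psd_sqrt_ex1[OF assms]] unfolding mat_sqrt_def by auto



lemma matrix_inv_props:
  fixes A :: "real^'n^'n"
  assumes "invertible A"
  shows "A ** matrix_inv A = mat 1" "matrix_inv A ** A = mat 1"
proof -
  have "\<exists>A'. A ** A' = mat 1 \<and> A' ** A = mat 1" using assms unfolding invertible_def by blast
  then have "A ** matrix_inv A = mat 1 \<and> matrix_inv A ** A = mat 1"
    unfolding matrix_inv_def by (rule someI_ex)
  then show "A ** matrix_inv A = mat 1" "matrix_inv A ** A = mat 1" by auto
qed

lemma matrix_inv_eq:
  fixes A B :: "real^'n^'n"
  assumes "A ** B = mat 1"
  shows "matrix_inv A = B"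
proof -
  have inv: "invertible A" using assms invertible_right_inverse by blast
  have "matrix_inv A = matrix_inv A ** (A ** B)" using assms by simp
  also have "\<dots> = (matrix_inv A ** A) ** B" by (simp add: matrix_mul_assoc)
  also have "\<dots> = B" using matrix_inv_props(2)[OF inv] by simp
  finally show ?thesis .
qed

lemma pd_inj:
  fixes A :: "real^'n^'n"
  assumes "pd A" "A *v x = 0"
  shows "x = 0"
  using assms unfolding pd_def by (metis inner_zero_right less_irrefl)

lemma pd_invertible:
  fixes A :: "real^'n^'n"
  assumes "pd A"
  shows "invertible A"
proof -
  have "inj ((*v) A)"
  proof (rule injI)
    fix x y assume "A *v x = A *v y"
    then have "A *v (x - y) = 0" by (simp add: matrix_vector_mult_diff_distrib)
    then show "x = y" using pd_inj[OF assms \<open>A *v (x - y) = 0\<close>] by simp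
  qed
  then show ?thesis using matrix_left_invertible_injective invertible_left_inverse by blast
qed

lemma pd_trace_pos:
  fixes A :: "real^'n^'n"
  assumes "pd A"
  shows "0 < trace A"
proof -
  have "A $ i $ i = axis i 1 \<bullet> (A *v axis i 1)" for i
    by (simp add: matrix_vector_mult_basis inner_commute[of "axis i 1"] inner_axis column_def)
  moreover have "0 < axis i 1 \<bullet> (A *v axis i (1::real))" for i
    using assms unfolding pd_def by (simp add: axis_eq_0_iff)
  ultimately have "0 < A $ i $ i" for i by simp
  then show ?thesis unfolding trace_def by (intro sum_pos) auto
qed

lemma det_scaleR_mat:
  fixes A :: "real^'n^'n"
  shows "det (c *\<^sub>R A) = c ^ CARD('n) * det A"
proof -
  have "c *\<^sub>R A = (c *\<^sub>R mat 1) ** A" by (simp add: scaleR_mat_left)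
  moreover have "det (c *\<^sub>R mat 1 :: real^'n^'n) = c ^ CARD('n)"
  proof -
    have "det (c *\<^sub>R mat 1 :: real^'n^'n) = (\<Prod>i\<in>UNIV. (c *\<^sub>R mat 1 :: real^'n^'n) $ i $ i)"
      by (rule det_diagonal) (simp add: mat_def)
    also have "\<dots> = c ^ CARD('n)" by (simp add: mat_def)
    finally show ?thesis .
  qed
  ultimately show ?thesis by (simp add: det_mul)
qed

lemma matrix_diff_ldistrib: "(A::real^'n^'m) ** (B - C) = A ** B - A ** C"
  by (simp add: matrix_matrix_mult_def vec_eq_iff sum_subtractf right_diff_distrib)

lemma matrix_diff_rdistrib: "(B - C) ** (A::real^'p^'n) = B ** A - C ** A" for B C :: "real^'n^'m"
  by (simp add: matrix_matrix_mult_def vec_eq_iff sum_subtractf left_diff_distrib)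

lemma det_rank_one:
  fixes v :: "real^'n"
  assumes v: "norm v = 1"
  shows "det (mat 1 - s *\<^sub>R outer v v) = 1 - s"
proof -
  obtain k :: 'n where True by blast
  obtain Q where Q: "orthogonal_matrix Q" "Q *v axis k 1 = v"
    using orthogonal_matrix_exists_basis[OF v] by blast
  define e :: "real^'n" where "e = axis k 1"
  define D where "D = mat 1 - s *\<^sub>R outer e e"
  have QQ: "transpose Q ** Q = mat 1" "Q ** transpose Q = mat 1" using Q(1) unfolding orthogonal_matrix_def by auto
  have "Q ** D ** transpose Q = Q ** transpose Q - s *\<^sub>R (Q ** outer e e ** transpose Q)"
    unfolding D_def by (simp add: matrix_diff_ldistrib matrix_diff_rdistrib scaleR_mat_left scaleR_mat_right matrix_mul_assoc)
  also have "Q ** outer e e ** transpose Q = outer v v"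
    using sandwich_outer[of "transpose Q" e e] Q(2) unfolding e_def by simp
  finally have eq: "mat 1 - s *\<^sub>R outer v v = Q ** D ** transpose Q" using QQ by simp
  have "det D = (\<Prod>i\<in>UNIV. D $ i $ i)"
    by (rule det_diagonal) (auto simp: D_def mat_def outer_def e_def axis_def)
  also have "\<dots> = (\<Prod>i\<in>UNIV. if i = k then 1 - s else 1)"
    by (rule prod.cong) (auto simp: D_def mat_def outer_def e_def axis_def)
  also have "\<dots> = 1 - s" by simp
  finally have dD: "det D = 1 - s" .
  have "det Q * det (transpose Q) = 1" using QQ(2) det_mul[of Q "transpose Q"] by simp
  then show ?thesis unfolding eq using dD by (simp add: det_mul)
qed



lemma pd_inv_quad_pos:
  fixes S :: "real^'n^'n"
  assumes "pd S" "y \<noteq> 0"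
  shows "0 < y \<bullet> (matrix_inv S *v y)"
proof -
  have inv: "invertible S" by (rule pd_invertible[OF assms(1)])
  define p where "p = matrix_inv S *v y"
  have Sp: "S *v p = y" unfolding p_def using matrix_inv_props(1)[OF inv]
    by (simp add: matrix_vector_mul_assoc)
  have "p \<noteq> 0" using Sp assms(2) by auto
  then have "0 < p \<bullet> (S *v p)" using assms(1) unfolding pd_def by blast
  also have "p \<bullet> (S *v p) = y \<bullet> p" using Sp by (simp add: inner_commute)
  finally show ?thesis unfolding p_def .
qed

lemma pd_scaleR: "pd S \<Longrightarrow> 0 < c \<Longrightarrow> pd (c *\<^sub>R S)"
  unfolding pd_def by (simp add: transpose_scalar scaleR_mulv)

lemma tme_obj_scale:
  fixes S :: "real^'d^'d" and Y :: "(real^'d) set"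
  assumes pdS: "pd S" and detS: "0 < det S" and fin: "finite Y" and ne: "Y \<noteq> {}" and nz: "0 \<notin> Y"
    and c: "0 < c"
  shows "tme_obj Y (c *\<^sub>R S) = tme_obj Y S"
proof -
  have inv: "invertible S" by (rule pd_invertible[OF pdS])
  have mi: "matrix_inv (c *\<^sub>R S) = (1 / c) *\<^sub>R matrix_inv S"
    by (rule matrix_inv_eq) (use c matrix_inv_props(1)[OF inv] in \<open>simp add: scaleR_mat_left scaleR_mat_right\<close>)
  define n where "n = real (card Y)"
  have n0: "0 < n" unfolding n_def using fin ne by (simp add: card_gt_0_iff)
  have q: "ln (y \<bullet> (matrix_inv (c *\<^sub>R S) *v y)) = ln (y \<bullet> (matrix_inv S *v y)) - ln c" if "y \<in> Y" for y
  proof -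
    have pos: "0 < y \<bullet> (matrix_inv S *v y)" using pd_inv_quad_pos[OF pdS] that nz by metis
    have "y \<bullet> (matrix_inv (c *\<^sub>R S) *v y) = (1 / c) * (y \<bullet> (matrix_inv S *v y))"
      by (simp add: mi scaleR_mulv)
    then show ?thesis using pos c by (simp add: ln_mult ln_div)
  qed
  have s1: "(\<Sum>y\<in>Y. ln (y \<bullet> (matrix_inv (c *\<^sub>R S) *v y))) = (\<Sum>y\<in>Y. ln (y \<bullet> (matrix_inv S *v y))) - n * ln c"
    using q by (simp add: sum_subtractf n_def)
  have s2: "ln (det (c *\<^sub>R S)) = real CARD('d) * ln c + ln (det S)"
    using c detS by (simp add: det_scaleR_mat ln_mult ln_realpow)
  show ?thesis unfolding tme_obj_def n_def[symmetric] s1 s2 using n0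
    by (simp add: field_simps)
qed



lemma matrix_add_rdistrib': "(B + C) ** (A::real^'p^'n) = B ** A + C ** A" for B C :: "real^'n^'m"
  by (simp add: matrix_matrix_mult_def vec_eq_iff sum.distrib distrib_right)

lemma outer_idem: "norm v = 1 \<Longrightarrow> outer v v ** outer v v = outer v (v::real^'n)"
  by (simp add: mat_outer outer_mulv norm_eq_1)

lemma tme_dir:
  fixes Y :: "(real^'d) set" and S R :: "real^'d^'d" and v :: "real^'d"
  assumes tme: "is_TME Y S" and fin: "finite Y" and ne: "Y \<noteq> {}" and nz: "0 \<notin> Y"
    and Rs: "transpose R = R" and RR: "R ** R = matrix_inv S" and v: "norm v = 1"
  shows "real (card Y) / real CARD('d) \<le> (\<Sum>y\<in>Y. (v \<bullet> (R *v y))\<^sup>2 / ((R *v y) \<bullet> (R *v y)))"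
proof -
  have pdS: "pd S" and trS: "trace S = real CARD('d)"
    and opt: "\<And>S'. pd S' \<Longrightarrow> trace S' = real CARD('d) \<Longrightarrow> tme_obj Y S \<le> tme_obj Y S'"
    using tme unfolding is_TME_def by auto
  have Ss: "transpose S = S" using pdS unfolding pd_def by simp
  have invS: "invertible S" by (rule pd_invertible[OF pdS])
  define Si where "Si = matrix_inv S"
  have SSi: "S ** Si = mat 1" "Si ** S = mat 1" unfolding Si_def using matrix_inv_props[OF invS] by auto
  define T where "T = R ** S"
  have RT: "R ** T = mat 1" unfolding T_def using RR SSi by (simp add: matrix_mul_assoc Si_def)
  then have TR: "T ** R = mat 1" using matrix_left_right_inverse by blast
  have SRR: "S ** R ** R = mat 1" using RR SSi by (simp add: matrix_mul_assoc[symmetric] Si_def)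
  have comm: "R ** S = S ** R"
  proof -
    have "R ** S = (S ** R ** R) ** R ** S" using SRR by simp
    also have "\<dots> = S ** R ** (R ** R ** S)" by (simp add: matrix_mul_assoc)
    also have "R ** R ** S = mat 1" using RR SSi by (simp add: Si_def)
    finally show ?thesis by simp
  qed
  have Ts: "transpose T = T" unfolding T_def using Ss Rs comm by (simp add: matrix_transpose_mul)
  have TT: "T ** T = S"
  proof -
    have "T ** T = R ** (S ** R) ** S" unfolding T_def by (simp add: matrix_mul_assoc)
    also have "\<dots> = R ** (R ** S) ** S" by (simp only: comm)
    also have "\<dots> = (R ** R ** S) ** S" by (simp add: matrix_mul_assoc)
    also have "R ** R ** S = mat 1" using RR SSi by (simp add: Si_def)
    finally show ?thesis by simp
  qed
  have detT: "det T * det R = 1" using TR det_mul[of T R] by simp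
  then have detT0: "det T \<noteq> 0" by auto
  have detS: "det S = det T * det T" using TT det_mul[of T T] by simp
  define z where "z y = R *v y" for y
  have zn: "z y \<noteq> 0" if "y \<in> Y" for y
  proof
    assume "z y = 0"
    then have "T *v z y = 0" by simp
    then have "y = 0" unfolding z_def using TR by (simp add: matrix_vector_mul_assoc)
    with that nz show False by simp
  qed
  have quadS: "y \<bullet> (matrix_inv S *v y) = z y \<bullet> z y" for y
    unfolding z_def using RR[symmetric] sym_inner[OF Rs, of y "R *v y"] by (simp add: matrix_vector_mul_assoc[symmetric])
  define a where "a y = (v \<bullet> z y)\<^sup>2 / (z y \<bullet> z y)" for y
  have a0: "0 \<le> a y" for y unfolding a_def by simp
  define n where "n = real (card Y)"
  define d where "d = real CARD('d)"
  have n0: "0 < n" unfolding n_def using fin ne by (simp add: card_gt_0_iff)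
  have d0: "0 < d" unfolding d_def by simp
  define K where "K = (\<Sum>y\<in>Y. a y)"
  have K0: "0 \<le> K" unfolding K_def using a0 by (simp add: sum_nonneg)
  have "n / d \<le> K"
  proof (rule ccontr)
    assume "\<not> n / d \<le> K"
    then have Klt: "d / n * K < 1" using n0 d0 by (simp add: field_simps)
    define \<alpha> where "\<alpha> = d / n * K"
    have \<alpha>0: "0 \<le> \<alpha>" unfolding \<alpha>_def using K0 n0 d0 by simp
    define u where "u = (1 - \<alpha>) / 2"
    have u0: "0 < u" and u1: "u \<le> 1" unfolding u_def using Klt \<alpha>0 \<alpha>_def by auto
    define s where "s = u / (1 + u)"
    have s0: "0 \<le> s" and s1: "s < 1" unfolding s_def using u0 by auto
    have oms: "1 - s = 1 / (1 + u)" unfolding s_def using u0 by (simp add: field_simps)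
    define N where "N = mat 1 - s *\<^sub>R outer v v"
    define M where "M = mat 1 + u *\<^sub>R outer v v"
    have MN: "M ** N = mat 1"
    proof -
      have "M ** N = mat 1 + (u - s - u * s) *\<^sub>R outer v v"
        unfolding M_def N_def using outer_idem[OF v]
        by (simp add: matrix_diff_ldistrib matrix_add_ldistrib matrix_add_rdistrib' scaleR_mat_left scaleR_mat_right
            algebra_simps)
      also have "u - s - u * s = 0" unfolding s_def using u0 by (simp add: field_simps)
      finally show ?thesis by simp
    qed
    then have NM: "N ** M = mat 1" using matrix_left_right_inverse by blast
    define Su where "Su = T ** N ** T"
    have SuI: "Su ** (R ** M ** R) = mat 1"
    proof -
      have "Su ** (R ** M ** R) = T ** N ** (T ** R) ** M ** R" unfolding Su_def by (simp add: matrix_mul_assoc)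
      also have "\<dots> = T ** (N ** M) ** R" using TR by (simp add: matrix_mul_assoc)
      also have "\<dots> = mat 1" using NM TR by simp
      finally show ?thesis .
    qed
    have miSu: "matrix_inv Su = R ** M ** R" by (rule matrix_inv_eq[OF SuI])
    have Ns: "transpose N = N" unfolding N_def by (simp add: transpose_diff' transpose_scalar transpose_outer)
    have pdSu: "pd Su"
      unfolding pd_def
    proof (intro conjI allI impI)
      show "transpose Su = Su" unfolding Su_def using Ts Ns by (simp add: matrix_transpose_mul matrix_mul_assoc)
    next
      fix x :: "real^'d" assume "x \<noteq> 0"
      define q where "q = T *v x"
      have "R *v q = x" unfolding q_def using RT by (simp add: matrix_vector_mul_assoc)
      then have qn: "q \<noteq> 0" using \<open>x \<noteq> 0\<close> by auto
      have "x \<bullet> (Su *v x) = q \<bullet> (N *v q)"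
        unfolding Su_def q_def using sym_inner[OF Ts] by (simp add: matrix_vector_mul_assoc[symmetric])
      also have "\<dots> = q \<bullet> q - s * (v \<bullet> q)\<^sup>2"
        unfolding N_def by (simp add: matrix_vector_mult_diff_rdistrib scaleR_mulv outer_mulv inner_diff_right
            power2_eq_square inner_commute)
      finally have eq: "x \<bullet> (Su *v x) = q \<bullet> q - s * (v \<bullet> q)\<^sup>2" .
      have cs: "(v \<bullet> q)\<^sup>2 \<le> q \<bullet> q"
        using Cauchy_Schwarz_ineq[of v q] v by (simp add: norm_eq_1)
      have "s * (v \<bullet> q)\<^sup>2 \<le> s * (q \<bullet> q)" using cs s0 by (simp add: mult_left_mono)
      moreover have "0 < (1 - s) * (q \<bullet> q)" using s1 qn by simp
      ultimately show "0 < x \<bullet> (Su *v x)" unfolding eq by (simp add: algebra_simps)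
    qed
    have detSu: "det Su = det T * det T * (1 - s)"
      unfolding Su_def N_def using det_rank_one[OF v, of s] by (simp add: det_mul)
    have "0 < det T * det T" using detT0 by (auto simp: zero_less_mult_iff linorder_neq_iff)
    then have detSu0: "0 < det Su" unfolding detSu using s1 by (simp add: mult_pos_pos)
    define c where "c = d / trace Su"
    have c0: "0 < c" unfolding c_def using pd_trace_pos[OF pdSu] d0 by simp
    have "pd (c *\<^sub>R Su)" by (rule pd_scaleR[OF pdSu c0])
    moreover have "trace (c *\<^sub>R Su) = real CARD('d)"
      unfolding c_def d_def using pd_trace_pos[OF pdSu] by (simp add: trace_scaleR)
    ultimately have "tme_obj Y S \<le> tme_obj Y (c *\<^sub>R Su)" by (rule opt)
    also have "\<dots> = tme_obj Y Su" by (rule tme_obj_scale[OF pdSu detSu0 fin ne nz c0])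
    finally have le: "tme_obj Y S \<le> tme_obj Y Su" .
    have quadSu: "y \<bullet> (matrix_inv Su *v y) = (z y \<bullet> z y) * (1 + u * a y)" if "y \<in> Y" for y
    proof -
      have "y \<bullet> (matrix_inv Su *v y) = z y \<bullet> (M *v z y)"
        unfolding miSu z_def using sym_inner[OF Rs, of y] by (simp add: matrix_vector_mul_assoc[symmetric])
      also have "\<dots> = z y \<bullet> z y + u * (v \<bullet> z y)\<^sup>2"
        unfolding M_def by (simp add: matrix_vector_mult_add_rdistrib scaleR_mulv outer_mulv inner_add_right
            power2_eq_square inner_commute)
      also have "\<dots> = (z y \<bullet> z y) * (1 + u * a y)"
        unfolding a_def using zn[OF that] by (simp add: field_simps)
      finally show ?thesis .
    qed
    have lnSu: "ln (y \<bullet> (matrix_inv Su *v y)) = ln (z y \<bullet> z y) + ln (1 + u * a y)" if "y \<in> Y" for y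
    proof -
      have "0 < z y \<bullet> z y" using zn[OF that] by simp
      moreover have "0 < 1 + u * a y" using u0 a0[of y] by (simp add: add_pos_nonneg)
      ultimately show ?thesis using quadSu[OF that] by (simp add: ln_mult)
    qed
    have objS: "tme_obj Y S = d / n * (\<Sum>y\<in>Y. ln (z y \<bullet> z y)) + ln (det T * det T)"
      unfolding tme_obj_def d_def n_def quadS detS ..
    have objSu: "tme_obj Y Su = d / n * ((\<Sum>y\<in>Y. ln (z y \<bullet> z y)) + (\<Sum>y\<in>Y. ln (1 + u * a y)))
        + ln (det T * det T) + ln (1 - s)"
    proof -
      have "(\<Sum>y\<in>Y. ln (y \<bullet> (matrix_inv Su *v y))) = (\<Sum>y\<in>Y. ln (z y \<bullet> z y) + ln (1 + u * a y))"
        using lnSu by (rule sum.cong[OF refl])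
      moreover have "ln (det Su) = ln (det T * det T) + ln (1 - s)"
        unfolding detSu using detT0 s1 by (simp add: ln_mult)
      ultimately show ?thesis unfolding tme_obj_def d_def n_def by (simp add: sum.distrib)
    qed
    have "0 \<le> d / n * (\<Sum>y\<in>Y. ln (1 + u * a y)) + ln (1 - s)"
      using le unfolding objS objSu by (simp add: algebra_simps)
    moreover have "(\<Sum>y\<in>Y. ln (1 + u * a y)) \<le> u * K"
    proof -
      have "(\<Sum>y\<in>Y. ln (1 + u * a y)) \<le> (\<Sum>y\<in>Y. u * a y)"
        by (rule sum_mono, rule ln_add_one_self_le_self) (use u0 a0 in simp)
      then show ?thesis unfolding K_def by (simp add: sum_distrib_left)
    qed
    ultimately have "0 \<le> d / n * (u * K) + ln (1 - s)"
      using n0 d0 by (smt (verit) divide_pos_pos mult_left_mono)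
    moreover have "ln (1 - s) = - ln (1 + u)" unfolding oms using u0 by (simp add: ln_div)
    moreover have "u - u\<^sup>2 \<le> ln (1 + u)" using ln_one_plus_pos_lower_bound[of u] u0 u1 by simp
    ultimately have "0 \<le> u * \<alpha> - u + u\<^sup>2" unfolding \<alpha>_def by (simp add: algebra_simps)
    then have "0 \<le> u * (\<alpha> - 1 + u)" by (simp add: algebra_simps power2_eq_square)
    then have "0 \<le> \<alpha> - 1 + u" using u0 by (simp add: zero_le_mult_iff)
    moreover have "\<alpha> < 1" using Klt unfolding \<alpha>_def .
    ultimately show False using u_def by (simp add: field_simps)
  qed
  then show ?thesis unfolding n_def d_def K_def a_def z_def .
qed



lemma inv_quad_var:
  fixes Sg :: "real^'n^'n"
  assumes pd: "pd Sg"
  shows "2 * (w \<bullet> x) - w \<bullet> (Sg *v w) \<le> x \<bullet> (matrix_inv Sg *v x)"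
    and "x \<bullet> (matrix_inv Sg *v x) = 2 * ((matrix_inv Sg *v x) \<bullet> x) - (matrix_inv Sg *v x) \<bullet> (Sg *v (matrix_inv Sg *v x))"
proof -
  have inv: "invertible Sg" by (rule pd_invertible[OF pd])
  have sym: "transpose Sg = Sg" using pd unfolding pd_def by simp
  define p where "p = matrix_inv Sg *v x"
  have Sp: "Sg *v p = x" unfolding p_def using matrix_inv_props(1)[OF inv] by (simp add: matrix_vector_mul_assoc)
  have "0 \<le> (w - p) \<bullet> (Sg *v (w - p))"
    using pd unfolding pd_def by (cases "w - p = 0") (auto intro: less_imp_le)
  also have "\<dots> = w \<bullet> (Sg *v w) - 2 * (w \<bullet> x) + p \<bullet> x"
    using Sp sym_inner[OF sym, of p w]
    by (simp add: matrix_vector_mult_diff_distrib inner_diff_left inner_diff_right inner_commute)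
  finally show "2 * (w \<bullet> x) - w \<bullet> (Sg *v w) \<le> x \<bullet> (matrix_inv Sg *v x)"
    unfolding p_def[symmetric] by (simp add: inner_commute)
  show "x \<bullet> (matrix_inv Sg *v x) = 2 * ((matrix_inv Sg *v x) \<bullet> x) - (matrix_inv Sg *v x) \<bullet> (Sg *v (matrix_inv Sg *v x))"
    unfolding p_def[symmetric] Sp by (simp add: inner_commute)
qed

lemma psd_semi_cs:
  fixes P :: "real^'n^'n"
  assumes "psd P"
  shows "(u \<bullet> (P *v v))\<^sup>2 \<le> (u \<bullet> (P *v u)) * (v \<bullet> (P *v v))"
proof -
  have sym: "transpose P = P" using assms unfolding psd_def by simp
  define a where "a = u \<bullet> (P *v u)"
  define b where "b = u \<bullet> (P *v v)"
  define g where "g = v \<bullet> (P *v v)"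
  have a0: "0 \<le> a" and g0: "0 \<le> g" using assms unfolding psd_def a_def g_def by auto
  have vu: "v \<bullet> (P *v u) = b" unfolding b_def using sym_inner[OF sym, of v u] by (simp add: inner_commute)
  have q: "0 \<le> a + 2 * t * b + t\<^sup>2 * g" for t
  proof -
    have "0 \<le> (u + t *\<^sub>R v) \<bullet> (P *v (u + t *\<^sub>R v))" using assms unfolding psd_def by simp
    also have "\<dots> = a + 2 * t * b + t\<^sup>2 * g"
      using vu unfolding a_def b_def g_def
      by (simp add: matrix_vector_right_distrib matrix_vector_mult_scaleR inner_add_left inner_add_right
          power2_eq_square algebra_simps)
    finally show ?thesis .
  qed
  show ?thesis
  proof (cases "g = 0")
    case True
    have "b = 0"
    proof (rule ccontr)
      assume "b \<noteq> 0"
      have "0 \<le> a + 2 * (- (a + 1) / (2 * b)) * b + (- (a + 1) / (2 * b))\<^sup>2 * g" by (rule q)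
      also have "\<dots> = -1" using True \<open>b \<noteq> 0\<close> by (simp add: field_simps)
      finally show False by simp
    qed
    then show ?thesis unfolding a_def[symmetric] b_def[symmetric] g_def[symmetric] using True by simp
  next
    case False
    then have gp: "0 < g" using g0 by simp
    have "0 \<le> a + 2 * (- b / g) * b + (- b / g)\<^sup>2 * g" by (rule q)
    also have "\<dots> = a - b\<^sup>2 / g" using gp by (simp add: field_simps power2_eq_square)
    finally have "b\<^sup>2 / g \<le> a" by simp
    then have "b\<^sup>2 \<le> a * g" using gp by (simp add: field_simps)
    then show ?thesis unfolding a_def[symmetric] b_def[symmetric] g_def[symmetric] .
  qed
qed

lemma psd_onorm_le:
  fixes P :: "real^'n^'n"
  assumes psd: "psd P" and b: "\<And>x. x \<bullet> (P *v x) \<le> bd * (x \<bullet> x)" and b0: "0 \<le> bd"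
  shows "onorm (\<lambda>x. P *v x) \<le> bd"
proof (rule onorm_le)
  fix v :: "real^'n"
  define u where "u = P *v v"
  have "(u \<bullet> u)\<^sup>2 \<le> (u \<bullet> (P *v u)) * (v \<bullet> (P *v v))"
    using psd_semi_cs[OF psd, of u v] unfolding u_def by simp
  also have "\<dots> \<le> (bd * (u \<bullet> u)) * (bd * (v \<bullet> v))"
    by (rule mult_mono) (use b psd in \<open>auto simp: psd_def intro: mult_nonneg_nonneg b0\<close>)
  finally have "(u \<bullet> u)\<^sup>2 \<le> bd\<^sup>2 * (v \<bullet> v) * (u \<bullet> u)" by (simp add: power2_eq_square algebra_simps)
  then have "u \<bullet> u \<le> bd\<^sup>2 * (v \<bullet> v)"
    by (cases "u \<bullet> u = 0") (auto simp: power2_eq_square mult_le_cancel_right)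
  then have "(norm u)\<^sup>2 \<le> (bd * norm v)\<^sup>2" by (simp add: power2_norm_eq_inner power_mult_distrib)
  then show "norm (P *v v) \<le> bd * norm v" unfolding u_def[symmetric]
    using b0 by (simp add: power2_le_iff_abs_le)
qed

lemma quad_le_onorm:
  fixes A :: "real^'n^'n"
  shows "x \<bullet> (A *v x) \<le> onorm (\<lambda>x. A *v x) * (x \<bullet> x)"
proof -
  have "x \<bullet> (A *v x) \<le> norm x * norm (A *v x)" by (rule norm_cauchy_schwarz)
  also have "\<dots> \<le> norm x * (onorm (\<lambda>x. A *v x) * norm x)"
    by (rule mult_left_mono) (auto intro: onorm matrix_vector_mul_bounded_linear)
  also have "\<dots> = onorm (\<lambda>x. A *v x) * (x \<bullet> x)" by (simp add: power2_norm_eq_inner[symmetric] power2_eq_square)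
  finally show ?thesis .
qed

lemma matrix_inv_sym:
  fixes S :: "real^'n^'n"
  assumes "pd S"
  shows "transpose (matrix_inv S) = matrix_inv S"
proof -
  have inv: "invertible S" by (rule pd_invertible[OF assms])
  have sym: "transpose S = S" using assms unfolding pd_def by simp
  have "S ** transpose (matrix_inv S) = transpose (matrix_inv S ** S)" using sym by (simp add: matrix_transpose_mul)
  also have "\<dots> = mat 1" using matrix_inv_props(2)[OF inv] by simp
  finally show ?thesis using matrix_inv_eq by metis
qed

lemma matrix_inv_psd:
  fixes S :: "real^'n^'n"
  assumes "pd S"
  shows "psd (matrix_inv S)"
  unfolding psd_def
proof (intro conjI allI)
  show "transpose (matrix_inv S) = matrix_inv S" by (rule matrix_inv_sym[OF assms])
  fix x show "0 \<le> x \<bullet> (matrix_inv S *v x)"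
    using pd_inv_quad_pos[OF assms, of x] by (cases "x = 0") auto
qed

lemma sum_outer_quad:
  "w \<bullet> ((\<Sum>x\<in>S. g x *\<^sub>R outer (f x) (f x)) *v w) = (\<Sum>x\<in>S. g x * (w \<bullet> f x)\<^sup>2)"
  for w :: "real^'n"
  by (simp add: sum_mulv scaleR_mulv outer_mulv inner_sum_right power2_eq_square inner_commute mult.assoc)

lemma transpose_weighted_outer:
  "transpose (\<Sum>x\<in>S. g x *\<^sub>R outer (f x) (f x)) = (\<Sum>x\<in>S. g x *\<^sub>R outer (f x) (f x :: real^'n))"
  by (simp add: transpose_sum transpose_scalar transpose_outer)

lemma sandwich_weighted_outer:
  "transpose (B::real^'m^'n) ** (\<Sum>x\<in>S. g x *\<^sub>R outer x x) ** B
   = (\<Sum>x\<in>S. g x *\<^sub>R outer (transpose B *v x) (transpose B *v x))"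
  by (simp add: sum_mat_left sum_mat_right scaleR_mat_left scaleR_mat_right sandwich_outer)



lemma quad_sandwich: "g \<bullet> ((transpose B ** A ** B) *v g) = (B *v g) \<bullet> (A *v (B *v g))"
  for B :: "real^'k^'n" and A :: "real^'n^'n"
  by (simp only: matrix_vector_mul_assoc[symmetric] inner_transpose_mulv)

lemma c_pos:
  fixes Sig :: "real^'D^'D" and Up :: "real^'k^'D"
  assumes pd: "pd Sig" and Up_on: "transpose Up ** Up = mat 1"
  shows "0 < spec_norm (transpose Up ** Sig ** Up)"
proof -
  obtain i :: 'k where True by blast
  define g :: "real^'k" where "g = axis i 1"
  have g0: "g \<noteq> 0" unfolding g_def by (simp add: axis_eq_0_iff)
  have "transpose Up *v (Up *v g) = g" using Up_on by (simp add: matrix_vector_mul_assoc)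
  then have "Up *v g \<noteq> 0" using g0 by auto
  then have "0 < (Up *v g) \<bullet> (Sig *v (Up *v g))" using pd unfolding pd_def by blast
  also have "\<dots> = g \<bullet> ((transpose Up ** Sig ** Up) *v g)"
    by (rule quad_sandwich[symmetric])
  also have "\<dots> \<le> spec_norm (transpose Up ** Sig ** Up) * (g \<bullet> g)"
    unfolding spec_norm_def by (rule quad_le_onorm)
  finally have "0 < spec_norm (transpose Up ** Sig ** Up) * (g \<bullet> g)" .
  moreover have "0 < g \<bullet> g" using g0 by simp
  ultimately show ?thesis by (metis zero_less_mult_pos2)
qed

lemma Upx_nz:
  fixes Up :: "real^'k^'D"
  assumes subL: "subspace L" and Up_span: "range (\<lambda>v. Up *v v) = orthogonal_comp L" and x: "x \<notin> L"
  shows "transpose Up *v x \<noteq> 0"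
proof (rule notI)
  assume h: "transpose Up *v x = 0"
  have "\<forall>y\<in>orthogonal_comp L. orthogonal y x"
  proof
    fix y assume "y \<in> orthogonal_comp L"
    then obtain b where "y = Up *v b" using Up_span by (metis rangeE)
    then show "orthogonal y x" unfolding orthogonal_def
      using h inner_transpose_mulv[of b Up x] by (simp del: transpose_matrix_vector)
  qed
  then have "x \<in> orthogonal_comp (orthogonal_comp L)" by (simp add: orthogonal_comp_def)
  then show False using orthogonal_comp_self[OF subL] x by simp
qed

lemma term_ii:
  fixes Sig :: "real^'D^'D" and Up :: "real^'k^'D"
  assumes pd: "pd Sig" and Up_on: "transpose Up ** Up = mat 1"
  shows "(transpose Up *v x) \<bullet> (transpose Up *v x) / spec_norm (transpose Up ** Sig ** Up)
           \<le> x \<bullet> (matrix_inv Sig *v x)"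
proof -
  define c where "c = spec_norm (transpose Up ** Sig ** Up)"
  have c0: "0 < c" unfolding c_def by (rule c_pos[OF pd Up_on])
  define g where "g = transpose Up *v x"
  define a where "a = (1 / c) *\<^sub>R g"
  define w where "w = Up *v a"
  have "2 * (w \<bullet> x) - w \<bullet> (Sig *v w) \<le> x \<bullet> (matrix_inv Sig *v x)" by (rule inv_quad_var(1)[OF pd])
  moreover have "w \<bullet> x = (g \<bullet> g) / c"
    unfolding w_def a_def g_def by (simp add: inner_commute[of "Up *v _"] inner_transpose_mulv[symmetric] scaleR_mulv)
  moreover have "w \<bullet> (Sig *v w) \<le> (g \<bullet> g) / c"
  proof -
    have "w \<bullet> (Sig *v w) = a \<bullet> ((transpose Up ** Sig ** Up) *v a)"
      unfolding w_def by (rule quad_sandwich[symmetric])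
    also have "\<dots> \<le> c * (a \<bullet> a)" unfolding c_def spec_norm_def by (rule quad_le_onorm)
    also have "\<dots> = (g \<bullet> g) / c" unfolding a_def using c0 by (simp add: power2_eq_square field_simps)
    finally show ?thesis .
  qed
  ultimately show ?thesis unfolding c_def[symmetric] g_def[symmetric] by linarith
qed

lemma sigma_pd_pos:
  fixes Sig :: "real^'D^'D"
  assumes pd: "pd Sig"
  shows "0 < sigma CARD('D) Sig"
proof -
  have sym: "transpose Sig = Sig" using pd unfolding pd_def by simp
  obtain v where v: "v \<noteq> 0" "Sig *v v = sigma CARD('D) Sig *\<^sub>R v"
    using sigma_props(1)[OF sym] unfolding EVs_def by blast
  have "0 < v \<bullet> (Sig *v v)" using pd v(1) unfolding pd_def by blast
  then have "0 < sigma CARD('D) Sig * (v \<bullet> v)" using v(2) by simp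
  moreover have "0 < v \<bullet> v" using v(1) by simp
  ultimately show ?thesis by (metis zero_less_mult_pos2)
qed

lemma term_iv:
  fixes Sig :: "real^'D^'D"
  assumes pd: "pd Sig"
  shows "x \<bullet> (matrix_inv Sig *v x) \<le> (x \<bullet> x) / sigma CARD('D) Sig"
proof -
  have sym: "transpose Sig = Sig" using pd unfolding pd_def by simp
  define s where "s = sigma CARD('D) Sig"
  have s0: "0 < s" unfolding s_def by (rule sigma_pd_pos[OF pd])
  define p where "p = matrix_inv Sig *v x"
  have eq: "x \<bullet> (matrix_inv Sig *v x) = 2 * (p \<bullet> x) - p \<bullet> (Sig *v p)"
    unfolding p_def by (rule inv_quad_var(2)[OF pd])
  define P where "P = norm p"
  define X where "X = norm x"
  have pp: "p \<bullet> p = P * P" unfolding P_def by (simp add: power2_norm_eq_inner[symmetric] power2_eq_square)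
  have xx: "x \<bullet> x = X * X" unfolding X_def by (simp add: power2_norm_eq_inner[symmetric] power2_eq_square)
  have "s * (p \<bullet> p) \<le> p \<bullet> (Sig *v p)" unfolding s_def by (rule sigma_le_rayleigh[OF sym])
  moreover have "p \<bullet> x \<le> P * X" unfolding P_def X_def by (rule norm_cauchy_schwarz)
  moreover have "s * (p \<bullet> p) = s * (P * P)" using pp by simp
  ultimately have h1: "2 * (p \<bullet> x) - p \<bullet> (Sig *v p) \<le> 2 * (P * X) - s * (P * P)" by linarith
  have sq: "(s * P - X)\<^sup>2 = s * s * (P * P) - 2 * s * (P * X) + X * X" by (simp add: power2_eq_square algebra_simps)
  have "0 \<le> (s * P - X)\<^sup>2" by simp
  then have h2: "s * (2 * (P * X) - s * (P * P)) \<le> X * X" unfolding sq by (simp add: algebra_simps)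
  have "s * (2 * (p \<bullet> x) - p \<bullet> (Sig *v p)) \<le> s * (2 * (P * X) - s * (P * P))"
    using h1 s0 by (simp add: mult_left_mono)
  then have "s * (2 * (p \<bullet> x) - p \<bullet> (Sig *v p)) \<le> (x \<bullet> x)" using h2 xx by linarith
  then show ?thesis unfolding eq s_def[symmetric] using s0 by (simp add: field_simps)
qed



lemma proj_L:
  fixes U :: "real^'d^'D"
  assumes U_on: "transpose U ** U = mat 1" and U_span: "range (\<lambda>v. U *v v) = L" and z: "z \<in> L"
  shows "U *v (transpose U *v z) = z"
proof -
  obtain a where "z = U *v a" using z U_span by (metis rangeE)
  then show ?thesis using U_on by (simp add: matrix_vector_mul_assoc[of "transpose U"] del: transpose_matrix_vector)
qed

lemma key_i:
  fixes Sig Sig1 Sig2 :: "real^'D^'D" and U :: "real^'d^'D" and R Ri :: "real^'d^'d"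
  assumes pd: "pd Sig" and dec: "Sig = Sig1 + Sig2" and p1: "psd Sig1" and p2: "psd Sig2"
    and im: "range (\<lambda>v. Sig1 *v v) \<subseteq> L" and U_on: "transpose U ** U = mat 1"
    and U_span: "range (\<lambda>v. U *v v) = L"
    and xL: "x \<in> L" and Rs: "transpose R = R" and RRi: "R ** Ri = mat 1"
    and lam: "0 < lam" and lb: "\<And>w. lam * (w \<bullet> w) \<le> w \<bullet> ((R ** (transpose U ** Sig1 ** U) ** R) *v w)"
  shows "x \<bullet> (matrix_inv Sig *v x) \<le> (R *v (transpose U *v x)) \<bullet> (R *v (transpose U *v x)) / lam"
proof -
  have s1: "transpose Sig1 = Sig1" using p1 unfolding psd_def by simp
  define B where "B = transpose U ** Sig1 ** U"
  define p where "p = matrix_inv Sig *v x"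
  define y where "y = transpose U *v x"
  define r where "r = transpose U *v p"
  have xUy: "x = U *v y" unfolding y_def using proj_L[OF U_on U_span xL] by simp
  have q: "x \<bullet> (matrix_inv Sig *v x) = 2 * (p \<bullet> x) - p \<bullet> (Sig *v p)"
    unfolding p_def by (rule inv_quad_var(2)[OF pd])
  have "p \<bullet> (Sig *v p) = p \<bullet> (Sig1 *v p) + p \<bullet> (Sig2 *v p)"
    unfolding dec by (simp add: matrix_vector_mult_add_rdistrib inner_add_right)
  moreover have "0 \<le> p \<bullet> (Sig2 *v p)" using p2 unfolding psd_def by simp
  ultimately have q1: "p \<bullet> (Sig1 *v p) \<le> p \<bullet> (Sig *v p)" by simp
  have px: "p \<bullet> x = r \<bullet> y" unfolding xUy r_def by (rule inner_mulv_transpose)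
  have inL: "Sig1 *v z \<in> L" for z using im by blast
  have pS1: "p \<bullet> (Sig1 *v p) = r \<bullet> (B *v r)"
  proof -
    have "p \<bullet> (Sig1 *v p) = p \<bullet> (U *v (transpose U *v (Sig1 *v p)))"
      using proj_L[OF U_on U_span inL[of p]] by simp
    also have "\<dots> = r \<bullet> (transpose U *v (Sig1 *v p))" unfolding r_def by (rule inner_mulv_transpose)
    also have "\<dots> = (U *v r) \<bullet> (Sig1 *v p)" by (rule inner_transpose_mulv)
    also have "\<dots> = (Sig1 *v (U *v r)) \<bullet> p" by (rule sym_inner[OF s1])
    also have "\<dots> = (U *v (transpose U *v (Sig1 *v (U *v r)))) \<bullet> p"
      using proj_L[OF U_on U_span inL[of "U *v r"]] by simp
    also have "\<dots> = p \<bullet> (U *v (transpose U *v (Sig1 *v (U *v r))))" by (rule inner_commute)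
    also have "\<dots> = r \<bullet> (transpose U *v (Sig1 *v (U *v r)))" unfolding r_def by (rule inner_mulv_transpose)
    also have "\<dots> = r \<bullet> (B *v r)" unfolding B_def by (simp only: matrix_vector_mul_assoc matrix_mul_assoc)
    finally show ?thesis .
  qed
  define t where "t = Ri *v r"
  have Rt: "R *v t = r" unfolding t_def using RRi by (simp add: matrix_vector_mul_assoc)
  have rBr: "r \<bullet> (B *v r) = t \<bullet> ((R ** B ** R) *v t)"
    unfolding Rt[symmetric] using sym_inner[OF Rs, of t "B *v (R *v t)"]
    by (simp add: matrix_vector_mul_assoc[symmetric])
  have tB: "lam * (t \<bullet> t) \<le> r \<bullet> (B *v r)" using lb[of t] rBr unfolding B_def by simp
  have ry: "r \<bullet> y = t \<bullet> (R *v y)" unfolding Rt[symmetric] using sym_inner[OF Rs, of y t] by (simp add: inner_commute)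
  define T where "T = norm t"
  define Y where "Y = norm (R *v y)"
  have tt: "t \<bullet> t = T * T" unfolding T_def by (simp add: power2_norm_eq_inner[symmetric] power2_eq_square)
  have yy: "(R *v y) \<bullet> (R *v y) = Y * Y" unfolding Y_def by (simp add: power2_norm_eq_inner[symmetric] power2_eq_square)
  have cs: "t \<bullet> (R *v y) \<le> T * Y" unfolding T_def Y_def by (rule norm_cauchy_schwarz)
  have "lam * (t \<bullet> t) = lam * (T * T)" using tt by simp
  then have h1: "x \<bullet> (matrix_inv Sig *v x) \<le> 2 * (T * Y) - lam * (T * T)"
    using q q1 px pS1 tB ry cs by linarith
  have sq: "(lam * T - Y)\<^sup>2 = lam * lam * (T * T) - 2 * lam * (T * Y) + Y * Y" by (simp add: power2_eq_square algebra_simps)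
  have "0 \<le> (lam * T - Y)\<^sup>2" by simp
  then have h2: "lam * (2 * (T * Y) - lam * (T * T)) \<le> Y * Y" unfolding sq by (simp add: algebra_simps)
  have "lam * (x \<bullet> (matrix_inv Sig *v x)) \<le> lam * (2 * (T * Y) - lam * (T * T))"
    using h1 lam by (simp add: mult_left_mono)
  then have "lam * (x \<bullet> (matrix_inv Sig *v x)) \<le> (R *v y) \<bullet> (R *v y)" using h2 yy by linarith
  then show ?thesis unfolding y_def[symmetric] using lam by (simp add: field_simps)
qed



lemma part_i:
  fixes X L :: "(real^'D) set" and U :: "real^'d^'D" and Sin R :: "real^'d^'d"
    and Sig Sig1 Sig2 :: "real^'D^'D"
  assumes finX: "finite X" and nz: "0 \<notin> X"
    and U_on: "transpose U ** U = mat 1" and U_span: "range (\<lambda>v. U *v v) = L"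
    and n1pos: "X \<inter> L \<noteq> {}"
    and tme: "is_TME ((\<lambda>x. transpose U *v x) ` (X \<inter> L)) Sin"
    and Sig_pd: "pd Sig" and Sig_dec: "Sig = Sig1 + Sig2"
    and Sig1_psd: "psd Sig1" and Sig2_psd: "psd Sig2"
    and Sig1_im: "range (\<lambda>v. Sig1 *v v) \<subseteq> L"
    and Rs: "transpose R = R" and RR: "R ** R = matrix_inv Sin"
  shows "real (card (X \<inter> L)) / real CARD('d) * sigma CARD('d) (R ** (transpose U ** Sig1 ** U) ** R)
         \<le> sigma CARD('d) (R ** (transpose U ** (\<Sum>x\<in>X \<inter> L. (1 / (x \<bullet> (matrix_inv Sig *v x))) *\<^sub>R outer x x) ** U) ** R)"
proof -
  define Y where "Y = (\<lambda>x. transpose U *v x) ` (X \<inter> L)"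
  define qf where "qf x = x \<bullet> (matrix_inv Sig *v x)" for x
  define B where "B = transpose U ** Sig1 ** U"
  define P where "P = transpose U ** (\<Sum>x\<in>X \<inter> L. (1 / qf x) *\<^sub>R outer x x) ** U"
  define lam where "lam = sigma CARD('d) (R ** B ** R)"
  define n1 where "n1 = real (card (X \<inter> L))"
  define d where "d = real CARD('d)"
  have d0: "0 < d" unfolding d_def by simp
  have n10: "0 \<le> n1" unfolding n1_def by simp
  have s1: "transpose Sig1 = Sig1" using Sig1_psd unfolding psd_def by simp
  have Bs: "transpose B = B" unfolding B_def using s1 by (simp add: matrix_transpose_mul matrix_mul_assoc)
  have RBRs: "transpose (R ** B ** R) = R ** B ** R" using Rs Bs by (simp add: matrix_transpose_mul matrix_mul_assoc)
  have lb: "lam * (w \<bullet> w) \<le> w \<bullet> ((R ** B ** R) *v w)" for w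
    unfolding lam_def by (rule sigma_le_rayleigh[OF RBRs])
  have Pe: "P = (\<Sum>x\<in>X \<inter> L. (1 / qf x) *\<^sub>R outer (transpose U *v x) (transpose U *v x))"
    unfolding P_def by (rule sandwich_weighted_outer)
  have Ps: "transpose P = P" unfolding Pe by (rule transpose_weighted_outer)
  have RPRs: "transpose (R ** P ** R) = R ** P ** R" using Rs Ps by (simp add: matrix_transpose_mul matrix_mul_assoc)
  have finXL: "finite (X \<inter> L)" using finX by simp
  have xnz: "x \<noteq> 0" if "x \<in> X \<inter> L" for x using that nz by auto
  have qpos: "0 < qf x" if "x \<in> X \<inter> L" for x unfolding qf_def using pd_inv_quad_pos[OF Sig_pd xnz[OF that]] .
  have quadRPR: "w \<bullet> ((R ** P ** R) *v w) = (\<Sum>x\<in>X \<inter> L. (1 / qf x) * ((R *v w) \<bullet> (transpose U *v x))\<^sup>2)" for w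
  proof -
    have "w \<bullet> ((R ** P ** R) *v w) = w \<bullet> ((transpose R ** P ** R) *v w)" using Rs by simp
    also have "\<dots> = (R *v w) \<bullet> (P *v (R *v w))" by (rule quad_sandwich)
    also have "\<dots> = (\<Sum>x\<in>X \<inter> L. (1 / qf x) * ((R *v w) \<bullet> (transpose U *v x))\<^sup>2)"
      unfolding Pe by (rule sum_outer_quad)
    finally show ?thesis .
  qed
  have "n1 / d * lam \<le> sigma CARD('d) (R ** P ** R)"
  proof (rule sigma_ge[OF RPRs])
    fix w :: "real^'d"
    show "n1 / d * lam * (w \<bullet> w) \<le> w \<bullet> ((R ** P ** R) *v w)"
    proof (cases "lam \<le> 0")
      case True
      have "0 \<le> n1 / d" using n10 d0 by simp
      then have "n1 / d * lam \<le> 0" using True by (rule mult_nonneg_nonpos)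
      then have "n1 / d * lam * (w \<bullet> w) \<le> 0" by (rule mult_nonpos_nonneg) simp
      also have "0 \<le> w \<bullet> ((R ** P ** R) *v w)" unfolding quadRPR
        using qpos by (intro sum_nonneg) (simp add: less_imp_le)
      finally show ?thesis .
    next
      case False
      then have lam0: "0 < lam" by simp
      have invS: "invertible Sin" using tme pd_invertible unfolding is_TME_def by blast
      define Ri where "Ri = R ** Sin"
      have RRi: "R ** Ri = mat 1" unfolding Ri_def using RR matrix_inv_props(2)[OF invS]
        by (simp add: matrix_mul_assoc)
      then have RiR: "Ri ** R = mat 1" using matrix_left_right_inverse by blast
      have key: "qf x \<le> (R *v (transpose U *v x)) \<bullet> (R *v (transpose U *v x)) / lam" if "x \<in> X \<inter> L" for x
        unfolding qf_def
        by (rule key_i[OF Sig_pd Sig_dec Sig1_psd Sig2_psd Sig1_im U_on U_span _ Rs RRi lam0])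
          (use that lb B_def in auto)
      define z where "z x = R *v (transpose U *v x)" for x
      have zpos: "0 < z x \<bullet> z x" if "x \<in> X \<inter> L" for x
      proof -
        have "transpose U *v x \<noteq> 0"
          using proj_L[OF U_on U_span, of x] that xnz[OF that] by (metis IntD2 matrix_vector_mult_0_right)
        moreover have "Ri *v z x = transpose U *v x" unfolding z_def using RiR by (simp add: matrix_vector_mul_assoc)
        ultimately have "z x \<noteq> 0" by auto
        then show ?thesis by simp
      qed
      have termb: "lam * ((w \<bullet> z x)\<^sup>2 / (z x \<bullet> z x)) \<le> (1 / qf x) * ((R *v w) \<bullet> (transpose U *v x))\<^sup>2"
        if "x \<in> X \<inter> L" for x
      proof -
        have e: "(R *v w) \<bullet> (transpose U *v x) = w \<bullet> z x" unfolding z_def using sym_inner[OF Rs, of w] by simp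
        have "lam / (z x \<bullet> z x) \<le> 1 / qf x"
          using key[OF that] qpos[OF that] zpos[OF that] lam0 unfolding z_def[symmetric]
          by (simp add: field_simps)
        then have "lam / (z x \<bullet> z x) * (w \<bullet> z x)\<^sup>2 \<le> 1 / qf x * (w \<bullet> z x)\<^sup>2"
          by (rule mult_right_mono) simp
        then show ?thesis unfolding e by (simp add: field_simps)
      qed
      have inj: "inj_on (\<lambda>x. transpose U *v x) (X \<inter> L)"
      proof (rule inj_onI)
        fix a b assume a: "a \<in> X \<inter> L" and b: "b \<in> X \<inter> L" and e: "transpose U *v a = transpose U *v b"
        have "a = U *v (transpose U *v a)" using proj_L[OF U_on U_span, of a] a by simp
        also have "\<dots> = U *v (transpose U *v b)" by (simp only: e)
        also have "\<dots> = b" using proj_L[OF U_on U_span, of b] b by simp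
        finally show "a = b" .
      qed
      have cardY: "card Y = card (X \<inter> L)" unfolding Y_def by (rule card_image[OF inj])
      have sumY: "(\<Sum>x\<in>X \<inter> L. (w \<bullet> z x)\<^sup>2 / (z x \<bullet> z x)) = (\<Sum>y\<in>Y. (w \<bullet> (R *v y))\<^sup>2 / ((R *v y) \<bullet> (R *v y)))"
        unfolding Y_def z_def by (simp only: sum.reindex[OF inj] o_def)
      have tmeY: "n1 / d * (w \<bullet> w) \<le> (\<Sum>y\<in>Y. (w \<bullet> (R *v y))\<^sup>2 / ((R *v y) \<bullet> (R *v y)))"
      proof (cases "w = 0")
        case True then show ?thesis by simp
      next
        case False
        define v where "v = (1 / norm w) *\<^sub>R w"
        have nv: "norm v = 1" unfolding v_def using False by simp
        have Yfin: "finite Y" unfolding Y_def using finXL by simp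
        have Yne: "Y \<noteq> {}" unfolding Y_def using n1pos by simp
        have Ynz: "0 \<notin> Y"
        proof
          assume "0 \<in> Y"
          then obtain x where x: "x \<in> X \<inter> L" "transpose U *v x = 0" unfolding Y_def by auto
          then have "x = 0" using proj_L[OF U_on U_span, of x] by (metis IntD2 matrix_vector_mult_0_right)
          then show False using x nz by auto
        qed
        have "real (card Y) / real CARD('d) \<le> (\<Sum>y\<in>Y. (v \<bullet> (R *v y))\<^sup>2 / ((R *v y) \<bullet> (R *v y)))"
          by (rule tme_dir[OF _ Yfin Yne Ynz Rs RR nv]) (use tme Y_def in simp)
        then have "n1 / d \<le> (\<Sum>y\<in>Y. (v \<bullet> (R *v y))\<^sup>2 / ((R *v y) \<bullet> (R *v y)))"
          unfolding n1_def d_def cardY .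
        then have "n1 / d * (w \<bullet> w) \<le> (\<Sum>y\<in>Y. (v \<bullet> (R *v y))\<^sup>2 / ((R *v y) \<bullet> (R *v y))) * (w \<bullet> w)"
          by (rule mult_right_mono) simp
        also have "\<dots> = (\<Sum>y\<in>Y. (w \<bullet> (R *v y))\<^sup>2 / ((R *v y) \<bullet> (R *v y)))"
        proof -
          have "(v \<bullet> (R *v y))\<^sup>2 * (w \<bullet> w) = (w \<bullet> (R *v y))\<^sup>2" for y
            unfolding v_def using False
            by (simp add: power2_eq_square power2_norm_eq_inner[symmetric] field_simps)
          then have eq: "(v \<bullet> (R *v y))\<^sup>2 / ((R *v y) \<bullet> (R *v y)) * (w \<bullet> w) = (w \<bullet> (R *v y))\<^sup>2 / ((R *v y) \<bullet> (R *v y))" for y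
            by (metis times_divide_eq_left mult.commute)
          show ?thesis by (simp only: sum_distrib_right eq)
        qed
        finally show ?thesis .
      qed
      have "n1 / d * lam * (w \<bullet> w) = lam * (n1 / d * (w \<bullet> w))" by simp
      also have "\<dots> \<le> lam * (\<Sum>x\<in>X \<inter> L. (w \<bullet> z x)\<^sup>2 / (z x \<bullet> z x))"
        unfolding sumY using tmeY lam0 by (intro mult_left_mono) auto
      also have "\<dots> = (\<Sum>x\<in>X \<inter> L. lam * ((w \<bullet> z x)\<^sup>2 / (z x \<bullet> z x)))" by (simp add: sum_distrib_left)
      also have "\<dots> \<le> (\<Sum>x\<in>X \<inter> L. (1 / qf x) * ((R *v w) \<bullet> (transpose U *v x))\<^sup>2)"
        by (rule sum_mono) (rule termb)
      also have "\<dots> = w \<bullet> ((R ** P ** R) *v w)" by (rule quadRPR[symmetric])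
      finally show ?thesis .
    qed
  qed
  then show ?thesis unfolding n1_def d_def lam_def B_def P_def qf_def .
qed



theorem lemma1:
  fixes X :: "(real^'D) set" and L :: "(real^'D) set"
    and U :: "real^'d^'D" and Up :: "real^'k^'D"
    and Sin :: "real^'d^'d"
    and Sig Sig1 Sig2 :: "real^'D^'D"
  assumes finX: "finite X" and nz: "0 \<notin> X"
    and subL: "subspace L" and dimL: "dim L = CARD('d)" and dlt: "CARD('d) < CARD('D)"
    and U_on: "transpose U ** U = mat 1" and U_span: "range (\<lambda>v. U *v v) = L"
    and Up_on: "transpose Up ** Up = mat 1" and Up_span: "range (\<lambda>v. Up *v v) = orthogonal_comp L"
    and n1pos: "X \<inter> L \<noteq> {}"
    and tme: "is_TME ((\<lambda>x. transpose U *v x) ` (X \<inter> L)) Sin"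
    and Sig_pd: "pd Sig" and Sig_dec: "Sig = Sig1 + Sig2"
    and Sig1_psd: "psd Sig1" and Sig2_psd: "psd Sig2"
    and Sig1_im: "range (\<lambda>v. Sig1 *v v) \<subseteq> L"
  defines "Xin \<equiv> X \<inter> L"
    and "Xout \<equiv> X - X \<inter> L"
    and "Splus_in \<equiv> (\<Sum>x\<in>X \<inter> L. (1 / (x \<bullet> (matrix_inv Sig *v x))) *\<^sub>R outer x x)"
    and "Splus_out \<equiv> (\<Sum>x\<in>X - X \<inter> L. (1 / (x \<bullet> (matrix_inv Sig *v x))) *\<^sub>R outer x x)"
    and "h \<equiv> (\<lambda>M. sigma CARD('d) (mat_sqrt (matrix_inv Sin) ** (transpose U ** M ** U)
                                     ** mat_sqrt (matrix_inv Sin)))"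
    and "c \<equiv> spec_norm (transpose Up ** Sig ** Up)"
    and "Aout \<equiv> spec_norm (\<Sum>x\<in>X - X \<inter> L. (1 / (norm (transpose Up *v x))\<^sup>2) *\<^sub>R outer x x)"
  shows "h Splus_in \<ge> real (card Xin) / real CARD('d) * h Sig1 \<and>
         loewner_le Splus_out
           (c *\<^sub>R (\<Sum>x\<in>Xout. (1 / (norm (transpose Up *v x))\<^sup>2) *\<^sub>R outer x x)) \<and>
         spec_norm Splus_out \<le> Aout * c \<and>
         trace (transpose Up ** Splus_out ** Up) \<le> real (card Xout) * c \<and>
         loewner_le (sigma CARD('D) Sig *\<^sub>R (\<Sum>x\<in>Xout. (1 / (norm x)\<^sup>2) *\<^sub>R outer x x)) Splus_out \<and>
         loewner_le (sigma CARD('D) Sig *\<^sub>R (\<Sum>x\<in>X. (1 / (norm x)\<^sup>2) *\<^sub>R outer x x))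
           (Splus_in + Splus_out)"
proof -
  define qf where "qf x = x \<bullet> (matrix_inv Sig *v x)" for x
  define sg where "sg = sigma CARD('D) Sig"
  have sg0: "0 < sg" unfolding sg_def by (rule sigma_pd_pos[OF Sig_pd])
  have c0: "0 < c" unfolding c_def by (rule c_pos[OF Sig_pd Up_on])
  have qpos: "0 < qf x" if "x \<in> X" for x
    unfolding qf_def using pd_inv_quad_pos[OF Sig_pd] that nz by metis
  have finS: "finite S" if "S \<subseteq> X" for S using finX that finite_subset by blast
  \<comment> \<open>part (i)\<close>
  have Sin_pd: "pd Sin" using tme unfolding is_TME_def by simp
  define R where "R = mat_sqrt (matrix_inv Sin)"
  have Rp: "psd R" "R ** R = matrix_inv Sin" unfolding R_def using mat_sqrt_props[OF matrix_inv_psd[OF Sin_pd]] by auto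
  have Rs: "transpose R = R" using Rp(1) unfolding psd_def by simp
  have P1: "h Splus_in \<ge> real (card Xin) / real CARD('d) * h Sig1"
    unfolding h_def Splus_in_def Xin_def R_def[symmetric]
    by (rule part_i[OF finX nz U_on U_span n1pos tme Sig_pd Sig_dec Sig1_psd Sig2_psd Sig1_im Rs Rp(2)])
  \<comment> \<open>part (ii)\<close>
  define gn where "gn x = (norm (transpose Up *v x))\<^sup>2" for x
  have gn: "gn x = (transpose Up *v x) \<bullet> (transpose Up *v x)" for x
    unfolding gn_def by (simp add: power2_norm_eq_inner)
  have out_term: "1 / qf x \<le> c * (1 / gn x)" "gn x / qf x \<le> c" if "x \<in> Xout" for x
  proof -
    have xX: "x \<in> X" and xL: "x \<notin> L" using that unfolding Xout_def by auto
    have "transpose Up *v x \<noteq> 0" by (rule Upx_nz[OF subL Up_span xL])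
    then have g0: "0 < gn x" unfolding gn by simp
    have "gn x / c \<le> qf x" unfolding gn qf_def c_def by (rule term_ii[OF Sig_pd Up_on])
    then show "1 / qf x \<le> c * (1 / gn x)" "gn x / qf x \<le> c" using g0 c0 qpos[OF xX] by (simp_all add: field_simps)
  qed
  have Xout_eq: "X - X \<inter> L = Xout" unfolding Xout_def ..
  have Sout: "Splus_out = (\<Sum>x\<in>Xout. (1 / qf x) *\<^sub>R outer x x)" unfolding Splus_out_def Xout_eq qf_def ..
  define M where "M = (\<Sum>x\<in>Xout. (1 / gn x) *\<^sub>R outer x x)"
  have P2: "loewner_le Splus_out (c *\<^sub>R M)"
    unfolding loewner_le_def Sout M_def scaleR_sum_outer sum_outer_diff
    by (rule psd_weighted_outer) (use out_term in simp)
  have Spsd: "psd Splus_out" unfolding Sout by (rule psd_weighted_outer) (use qpos Xout_def in \<open>auto simp: less_imp_le\<close>)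
  have Aout_eq: "Aout = onorm (\<lambda>x. M *v x)" unfolding Aout_def M_def gn_def Xout_eq spec_norm_def ..
  have A0: "0 \<le> Aout" unfolding Aout_eq by (rule onorm_pos_le) (rule matrix_vector_mul_bounded_linear)
  have P3: "spec_norm Splus_out \<le> Aout * c"
    unfolding spec_norm_def
  proof (rule psd_onorm_le[OF Spsd])
    fix x :: "real^'D"
    have "0 \<le> x \<bullet> ((c *\<^sub>R M - Splus_out) *v x)" using P2 unfolding loewner_le_def psd_def by blast
    then have "x \<bullet> (Splus_out *v x) \<le> c * (x \<bullet> (M *v x))"
      by (simp add: matrix_vector_mult_diff_rdistrib inner_diff_right scaleR_mulv)
    also have "\<dots> \<le> c * (Aout * (x \<bullet> x))"
      unfolding Aout_eq using c0 by (intro mult_left_mono quad_le_onorm) auto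
    finally show "x \<bullet> (Splus_out *v x) \<le> Aout * c * (x \<bullet> x)" by (simp add: algebra_simps)
  next
    show "0 \<le> Aout * c" using A0 c0 by simp
  qed
  \<comment> \<open>part (iii)\<close>
  have P4: "trace (transpose Up ** Splus_out ** Up) \<le> real (card Xout) * c"
  proof -
    have "trace (transpose Up ** Splus_out ** Up) = (\<Sum>x\<in>Xout. (1 / qf x) * gn x)"
      unfolding Sout sandwich_weighted_outer trace_sum trace_scaleR trace_outer gn ..
    also have "\<dots> \<le> real (card Xout) * c"
      by (rule sum_bounded_above) (use out_term in simp)
    finally show ?thesis .
  qed
  \<comment> \<open>part (iv)\<close>
  have iv_gen: "psd ((\<Sum>x\<in>S. (1 / qf x) *\<^sub>R outer x x) - sg *\<^sub>R (\<Sum>x\<in>S. (1 / (norm x)\<^sup>2) *\<^sub>R outer x x))"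
    if S: "S \<subseteq> X" for S
    unfolding scaleR_sum_outer sum_outer_diff
  proof (rule psd_weighted_outer)
    fix x assume "x \<in> S"
    then have xX: "x \<in> X" using S by auto
    then have x0: "x \<noteq> 0" using nz by auto
    have "qf x \<le> (x \<bullet> x) / sg" unfolding qf_def sg_def by (rule term_iv[OF Sig_pd])
    then have "sg * (1 / (norm x)\<^sup>2) \<le> 1 / qf x"
      using qpos[OF xX] sg0 x0 by (simp add: power2_norm_eq_inner field_simps)
    then show "0 \<le> 1 / qf x - sg * (1 / (norm x)\<^sup>2)" by simp
  qed
  have P5: "loewner_le (sg *\<^sub>R (\<Sum>x\<in>Xout. (1 / (norm x)\<^sup>2) *\<^sub>R outer x x)) Splus_out"
    unfolding loewner_le_def Sout by (rule iv_gen) (auto simp: Xout_def)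
  have Sin_eq: "Splus_in = (\<Sum>x\<in>X \<inter> L. (1 / qf x) *\<^sub>R outer x x)" unfolding Splus_in_def qf_def ..
  have XU: "X = (X \<inter> L) \<union> Xout" and XD: "(X \<inter> L) \<inter> Xout = {}" unfolding Xout_def by auto
  have split: "(\<Sum>x\<in>X. (1 / (norm x)\<^sup>2) *\<^sub>R outer x x)
      = (\<Sum>x\<in>X \<inter> L. (1 / (norm x)\<^sup>2) *\<^sub>R outer x x) + (\<Sum>x\<in>Xout. (1 / (norm x)\<^sup>2) *\<^sub>R outer x x)"
    by (subst XU, rule sum.union_disjoint) (use finX XD Xout_def in auto)
  have P6: "loewner_le (sg *\<^sub>R (\<Sum>x\<in>X. (1 / (norm x)\<^sup>2) *\<^sub>R outer x x)) (Splus_in + Splus_out)"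
  proof -
    have eq: "Splus_in + Splus_out - sg *\<^sub>R (\<Sum>x\<in>X. (1 / (norm x)\<^sup>2) *\<^sub>R outer x x)
        = (Splus_in - sg *\<^sub>R (\<Sum>x\<in>X \<inter> L. (1 / (norm x)\<^sup>2) *\<^sub>R outer x x))
          + (Splus_out - sg *\<^sub>R (\<Sum>x\<in>Xout. (1 / (norm x)\<^sup>2) *\<^sub>R outer x x))"
      unfolding split by (simp add: scaleR_add_right algebra_simps)
    have p1: "psd (Splus_in - sg *\<^sub>R (\<Sum>x\<in>X \<inter> L. (1 / (norm x)\<^sup>2) *\<^sub>R outer x x))"
      unfolding Sin_eq by (rule iv_gen) auto
    have p2: "psd (Splus_out - sg *\<^sub>R (\<Sum>x\<in>Xout. (1 / (norm x)\<^sup>2) *\<^sub>R outer x x))"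
      unfolding Sout by (rule iv_gen) (auto simp: Xout_def)
    show ?thesis unfolding loewner_le_def eq by (rule psd_add[OF p1 p2])
  qed
  show ?thesis using P1 P2 P3 P4 P5 P6 unfolding M_def gn_def sg_def by blast
qed


end
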